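(* Let $\mathbb{H}_1,\mathbb{H}_2$ be Hilbert spaces (both real or both complex). Let $T\in \mathbb{L}(\mathbb{H}_1,\mathbb{H}_2)$ with $\|T\|=1$ be such that $M_T=S_{H_0}$, where $H_0$ is a finite-dimensional subspace of $\mathbb{H}_1$ with $\dim(H_0)=n$, and $\|T|_{H_0^\perp}\|<1$. Then $T$ is $n^2$-smooth if $\mathbb{H}_1,\mathbb{H}_2$ are complex, and $T$ is $\binom{n+1}{2}$-smooth if $\mathbb{H}_1,\mathbb{H}_2$ are real.
   Context: $\mathbb{L}(\mathbb{X},\mathbb{Y})$ denotes the space of bounded linear operators between Banach spaces with the operator norm. $S_{\mathbb{X}}$ is the unit sphere of $\mathbb{X}$. For $T\in\mathbb{L}(\mathbb{X},\mathbb{Y})$, the norm attainment set is $M_T=\{x\in S_{\mathbb{X}}:\|Tx\|=\|T\|\}$. For a Banach space $\mathbb{Z}$ and $z\in S_{\mathbb{Z}}$, let $J(z)=\{f\in \mathbb{Z}^*:\|f\|=1,\ f(z)=1\}$; $z$ is called $k$-smooth if $\dim \operatorname{span} J(z)=k$. An operator $T$ of norm one is $k$-smooth if it is a $k$-smooth point of the unit sphere of $\mathbb{Z}=\mathbb{L}(\mathbb{H}_1,\mathbb{H}_2)$. *)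

theory Defs
  imports "HOL-Analysis.Analysis" "HOL-Library.Function_Algebras"
begin

definition norm_attain_set :: "('a::real_normed_vector \<Rightarrow>\<^sub>L 'b::real_normed_vector) \<Rightarrow> 'a set" where
  "norm_attain_set T = {x. norm x = 1 \<and> norm (blinfun_apply T x) = norm T}"

definition restr_norm :: "('a::real_normed_vector \<Rightarrow> 'b::real_normed_vector) \<Rightarrow> 'a set \<Rightarrow> real" where
  "restr_norm T V = Sup {norm (T x) | x. x \<in> V \<and> norm x \<le> 1}"

definition supp_funcs :: "'z::real_normed_vector \<Rightarrow> ('z \<Rightarrow>\<^sub>L real) set" where
  "supp_funcs z = {f. norm f = 1 \<and> blinfun_apply f z = 1}"

definition k_smooth :: "'z::real_normed_vector \<Rightarrow> nat \<Rightarrow> bool" where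
  "k_smooth z k \<longleftrightarrow> norm z = 1 \<and>
     (\<exists>B. finite B \<and> independent B \<and> span B = span (supp_funcs z) \<and> card B = k)"

text \<open>A complex Hilbert space, presented as a real Hilbert space (inner product = real part of
  the complex inner product) with a complex scalar multiplication extending the real one,
  for which multiplication by i is orthogonal.\<close>
class complex_hilbert = real_inner + complete_space +
  fixes scaleC :: "complex \<Rightarrow> 'a \<Rightarrow> 'a"
  assumes scaleC_add_right: "scaleC a (x + y) = scaleC a x + scaleC a y"
    and scaleC_add_left: "scaleC (a + b) x = scaleC a x + scaleC b x"
    and scaleC_scaleC: "scaleC a (scaleC b x) = scaleC (a * b) x"
    and scaleC_one: "scaleC 1 x = x"
    and scaleC_of_real: "scaleC (complex_of_real r) x = r *\<^sub>R x"
    and inner_scaleC_ii: "inner (scaleC \<i> x) (scaleC \<i> y) = inner x y"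


instantiation complex :: complex_hilbert
begin
definition scaleC_complex :: "complex \<Rightarrow> complex \<Rightarrow> complex" where "scaleC_complex a x = a * x"
instance by standard (auto simp: scaleC_complex_def algebra_simps inner_complex_def scaleR_conv_of_real)
end

lemma vector_space_scaleC: "vector_space (scaleC :: complex \<Rightarrow> 'a::complex_hilbert \<Rightarrow> 'a)"
  by unfold_locales (simp_all add: scaleC_add_right scaleC_add_left scaleC_scaleC scaleC_one)

definition cinner :: "'a::complex_hilbert \<Rightarrow> 'a \<Rightarrow> complex" where
  "cinner x y = Complex (inner x y) (inner x (scaleC \<i> y))"

definition corth_comp :: "'a::complex_hilbert set \<Rightarrow> 'a set" where
  "corth_comp W = {x. \<forall>y\<in>W. cinner y x = 0}"

definition clinear_op :: "('a::complex_hilbert \<Rightarrow>\<^sub>L 'b::complex_hilbert) \<Rightarrow> bool" where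
  "clinear_op A \<longleftrightarrow> (\<forall>c x. blinfun_apply A (scaleC c x) = scaleC c (blinfun_apply A x))"

text \<open>The complex Banach space L(H1,H2) is represented as the set of complex-linear blinfuns.\<close>
definition cscaleL :: "complex \<Rightarrow> ('a::complex_hilbert \<Rightarrow>\<^sub>L 'b::complex_hilbert) \<Rightarrow> ('a \<Rightarrow>\<^sub>L 'b)" where
  "cscaleL c A = Blinfun (\<lambda>x. scaleC c (blinfun_apply A x))"

text \<open>Bounded complex-linear functionals on L(H1,H2), extended by 0 outside of it.\<close>
definition cdual :: "(('a::complex_hilbert \<Rightarrow>\<^sub>L 'b::complex_hilbert) \<Rightarrow> complex) set" where
  "cdual = {f. (\<forall>A B. clinear_op A \<longrightarrow> clinear_op B \<longrightarrow> f (A + B) = f A + f B)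
      \<and> (\<forall>c A. clinear_op A \<longrightarrow> f (cscaleL c A) = c * f A)
      \<and> (\<exists>K. \<forall>A. clinear_op A \<longrightarrow> cmod (f A) \<le> K * norm A)
      \<and> (\<forall>A. \<not> clinear_op A \<longrightarrow> f A = 0)}"

definition cdual_norm :: "(('a::complex_hilbert \<Rightarrow>\<^sub>L 'b::complex_hilbert) \<Rightarrow> complex) \<Rightarrow> real" where
  "cdual_norm f = Sup {cmod (f A) | A. clinear_op A \<and> norm A \<le> 1}"

definition csupp_funcs :: "('a::complex_hilbert \<Rightarrow>\<^sub>L 'b::complex_hilbert) \<Rightarrow> (('a \<Rightarrow>\<^sub>L 'b) \<Rightarrow> complex) set" where
  "csupp_funcs T = {f \<in> cdual. cdual_norm f = 1 \<and> f T = 1}"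

definition fscale :: "complex \<Rightarrow> ('z \<Rightarrow> complex) \<Rightarrow> ('z \<Rightarrow> complex)" where
  "fscale c f = (\<lambda>A. c * f A)"

definition ck_smooth :: "('a::complex_hilbert \<Rightarrow>\<^sub>L 'b::complex_hilbert) \<Rightarrow> nat \<Rightarrow> bool" where
  "ck_smooth T k \<longleftrightarrow> clinear_op T \<and> norm T = 1 \<and>
     (\<exists>B. finite B \<and> \<not> module.dependent fscale B \<and>
          module.span fscale B = module.span fscale (csupp_funcs T) \<and> card B = k)"

end

theory Submission
  imports Defs
begin


lemma lin_quad_zero:
  fixes a D :: real
  assumes "\<And>t. t * a \<le> D * t\<^sup>2"
  shows "a = 0"
proof (rule ccontr)
  assume a: "a \<noteq> 0"
  define K where "K = 2 * \<bar>D\<bar> + 1"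
  have K: "K > 0" unfolding K_def by simp
  have "(a / K) * a \<le> D * (a / K)\<^sup>2" by (rule assms)
  hence "a\<^sup>2 / K \<le> D * a\<^sup>2 / K\<^sup>2" by (simp add: power2_eq_square field_simps)
  hence "a\<^sup>2 * K \<le> D * a\<^sup>2" using K by (simp add: field_simps power2_eq_square)
  moreover have "D * a\<^sup>2 \<le> \<bar>D\<bar> * a\<^sup>2" by (intro mult_right_mono) auto
  moreover have "a\<^sup>2 > 0" using a by simp
  ultimately have "a\<^sup>2 * K \<le> \<bar>D\<bar> * a\<^sup>2" by linarith
  hence "a\<^sup>2 * K \<le> a\<^sup>2 * \<bar>D\<bar>" by (simp add: mult.commute)
  hence "K \<le> \<bar>D\<bar>" using \<open>a\<^sup>2 > 0\<close> by (simp add: mult_le_cancel_left_pos)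
  thus False unfolding K_def by simp
qed


lemma cross_zero:
  fixes T :: "'a::real_inner \<Rightarrow>\<^sub>L 'b::real_inner"
  assumes nT: "norm T \<le> 1" and h: "norm (T h) = norm h" and hk: "h \<bullet> k = 0"
  shows "T h \<bullet> T k = 0"
proof -
  have "t * (2 * (T h \<bullet> T k)) \<le> (norm k)\<^sup>2 * t\<^sup>2" for t
  proof -
    have "norm (T (h + t *\<^sub>R k)) \<le> norm T * norm (h + t *\<^sub>R k)"
      by (rule norm_blinfun)
    also have "\<dots> \<le> 1 * norm (h + t *\<^sub>R k)" using nT by (intro mult_right_mono) auto
    finally have "norm (T (h + t *\<^sub>R k)) \<le> norm (h + t *\<^sub>R k)" by simp
    hence "(norm (T (h + t *\<^sub>R k)))\<^sup>2 \<le> (norm (h + t *\<^sub>R k))\<^sup>2"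
      by (simp add: power_mono)
    hence "(T h + t *\<^sub>R T k) \<bullet> (T h + t *\<^sub>R T k) \<le> (h + t *\<^sub>R k) \<bullet> (h + t *\<^sub>R k)"
      by (simp only: power2_norm_eq_inner blinfun.add_right blinfun.scaleR_right)
    moreover have "(T h + t *\<^sub>R T k) \<bullet> (T h + t *\<^sub>R T k) = T h \<bullet> T h + t * (2 * (T h \<bullet> T k)) + t\<^sup>2 * (T k \<bullet> T k)"
      by (simp add: inner_add_left inner_add_right inner_commute power2_eq_square algebra_simps)
    moreover have "(h + t *\<^sub>R k) \<bullet> (h + t *\<^sub>R k) = h \<bullet> h + t\<^sup>2 * (k \<bullet> k)"
      using hk by (simp add: inner_add_left inner_add_right inner_commute power2_eq_square)
    moreover have "t\<^sup>2 * (k \<bullet> k) = (norm k)\<^sup>2 * t\<^sup>2" by (simp add: power2_norm_eq_inner)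
    moreover have "T h \<bullet> T h = h \<bullet> h" using h by (metis power2_norm_eq_inner)
    moreover have "t\<^sup>2 * (T k \<bullet> T k) \<ge> 0" by simp
    ultimately show ?thesis by linarith
  qed
  hence "2 * (T h \<bullet> T k) = 0" by (rule lin_quad_zero)
  thus ?thesis by simp
qed

lemma core_bound:
  fixes T Y :: "'a::real_inner \<Rightarrow>\<^sub>L 'b::real_inner" and P :: "'a \<Rightarrow> 'a"
  assumes nT: "norm T = 1"
    and iso: "\<And>x. norm (T (P x)) = norm (P x)"
    and orth: "\<And>x. P x \<bullet> (x - P x) = 0"
    and small: "\<And>x. norm (T (x - P x)) \<le> c * norm (x - P x)"
    and c0: "0 \<le> c" and c1: "c < 1"
    and cross: "\<And>x. T (P x) \<bullet> T (x - P x) = 0"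
    and Yq: "\<And>x. T (P x) \<bullet> Y (P x) = 0"
  shows "\<exists>D. \<forall>e. norm (T + e *\<^sub>R Y) \<le> 1 + D * e\<^sup>2"
proof -
  define M where "M = norm Y"
  define eta where "eta = 1 - c\<^sup>2"
  have eta: "eta > 0" unfolding eta_def using c0 c1 using power_strict_mono[of c 1 2] c0 c1 by simp
  define D where "D = M\<^sup>2 + 4 * M\<^sup>2 / eta"
  have D0: "D \<ge> 0" unfolding D_def using eta by simp
  have main: "norm ((T + e *\<^sub>R Y) x) \<le> (1 + D * e\<^sup>2) * norm x" for e x
  proof -
    define h where "h = P x"
    define k where "k = x - P x"
    have xhk: "x = h + k" unfolding h_def k_def by simp
    have hk: "h \<bullet> k = 0" using orth[of x] unfolding h_def k_def by simp
    have nx: "(norm x)\<^sup>2 = (norm h)\<^sup>2 + (norm k)\<^sup>2"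
      using norm_add_Pythagorean[of h k] hk xhk by (simp add: orthogonal_def)
    have nh: "norm h \<le> norm x" by (rule power2_le_imp_le) (use nx in auto)
    have nk: "norm k \<le> norm x" by (rule power2_le_imp_le) (use nx in auto)
    have Th: "norm (T h) = norm h" using iso unfolding h_def by simp
    have Tk: "norm (T k) \<le> c * norm k" using small unfolding k_def by simp
    have Tk1: "norm (T k) \<le> norm k" using Tk mult_left_le_one_le[of "norm k" c] c1 c0 by simp
    have cr: "T h \<bullet> T k = 0" using cross unfolding h_def k_def by simp
    have Tx2: "(norm (T x))\<^sup>2 \<le> (norm h)\<^sup>2 + c\<^sup>2 * (norm k)\<^sup>2"
    proof -
      have "(norm (T x))\<^sup>2 = (norm (T h))\<^sup>2 + (norm (T k))\<^sup>2"
        using norm_add_Pythagorean[of "T h" "T k"] cr xhk by (simp add: orthogonal_def blinfun.add_right)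
      moreover have "(norm (T k))\<^sup>2 \<le> (c * norm k)\<^sup>2" using Tk by (simp add: power_mono)
      ultimately show ?thesis using Th by (simp add: power_mult_distrib)
    qed
    have Yx: "norm (Y x) \<le> M * norm x" unfolding M_def by (rule norm_blinfun)
    have Yk: "norm (Y k) \<le> M * norm k" unfolding M_def by (rule norm_blinfun)
    have M0: "M \<ge> 0" unfolding M_def by simp
    have ip: "\<bar>T x \<bullet> Y x\<bar> \<le> 2 * M * norm k * norm x"
    proof -
      have "T x \<bullet> Y x = T h \<bullet> Y h + T h \<bullet> Y k + T k \<bullet> Y x"
        unfolding xhk blinfun.add_right
        by (simp add: inner_add_left inner_add_right)
      moreover have "T h \<bullet> Y h = 0" using Yq unfolding h_def by simp
      moreover have "\<bar>T h \<bullet> Y k\<bar> \<le> M * norm k * norm x"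
      proof -
        have "\<bar>T h \<bullet> Y k\<bar> \<le> norm (T h) * norm (Y k)" by (rule Cauchy_Schwarz_ineq2)
        also have "\<dots> \<le> norm x * (M * norm k)" using Th nh Yk
          by (intro mult_mono) auto
        finally show ?thesis by (simp add: algebra_simps)
      qed
      moreover have "\<bar>T k \<bullet> Y x\<bar> \<le> M * norm k * norm x"
      proof -
        have "\<bar>T k \<bullet> Y x\<bar> \<le> norm (T k) * norm (Y x)" by (rule Cauchy_Schwarz_ineq2)
        also have "\<dots> \<le> norm k * (M * norm x)" using Tk1 Yx
          by (intro mult_mono) auto
        finally show ?thesis by (simp add: algebra_simps)
      qed
      ultimately show ?thesis by linarith
    qed
    have amgm: "4 * \<bar>e\<bar> * M * norm k * norm x \<le> eta * (norm k)\<^sup>2 + 4 * e\<^sup>2 * M\<^sup>2 * (norm x)\<^sup>2 / eta"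
    proof -
      have "0 \<le> (eta * norm k - 2 * \<bar>e\<bar> * M * norm x)\<^sup>2" by simp
      hence "4 * eta * \<bar>e\<bar> * M * norm k * norm x \<le> eta\<^sup>2 * (norm k)\<^sup>2 + 4 * e\<^sup>2 * M\<^sup>2 * (norm x)\<^sup>2"
        by (simp add: power2_eq_square algebra_simps)
      hence "eta * (4 * \<bar>e\<bar> * M * norm k * norm x) \<le> eta * (eta * (norm k)\<^sup>2 + 4 * e\<^sup>2 * M\<^sup>2 * (norm x)\<^sup>2 / eta)"
        using eta by (simp add: algebra_simps power2_eq_square)
      thus ?thesis using eta by simp
    qed
    have "(norm ((T + e *\<^sub>R Y) x))\<^sup>2 = (norm (T x))\<^sup>2 + 2 * e * (T x \<bullet> Y x) + e\<^sup>2 * (norm (Y x))\<^sup>2"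
      unfolding blinfun.add_left blinfun.scaleR_left power2_norm_eq_inner
      by (simp add: inner_add_left inner_add_right inner_commute power2_eq_square algebra_simps)
    also have "\<dots> \<le> ((norm h)\<^sup>2 + c\<^sup>2 * (norm k)\<^sup>2) + 4 * \<bar>e\<bar> * M * norm k * norm x + e\<^sup>2 * (M * norm x)\<^sup>2"
    proof -
      have "2 * e * (T x \<bullet> Y x) \<le> 2 * \<bar>e\<bar> * \<bar>T x \<bullet> Y x\<bar>"
        by (simp add: abs_mult[symmetric])
      also have "\<dots> \<le> 2 * \<bar>e\<bar> * (2 * M * norm k * norm x)" using ip by (intro mult_left_mono) auto
      finally have a: "2 * e * (T x \<bullet> Y x) \<le> 4 * \<bar>e\<bar> * M * norm k * norm x" by simp
      have b: "e\<^sup>2 * (norm (Y x))\<^sup>2 \<le> e\<^sup>2 * (M * norm x)\<^sup>2" using Yx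
        by (intro mult_left_mono power_mono) auto
      show ?thesis using Tx2 a b by linarith
    qed
    also have "\<dots> \<le> (norm x)\<^sup>2 + D * e\<^sup>2 * (norm x)\<^sup>2"
    proof -
      have "(norm h)\<^sup>2 + c\<^sup>2 * (norm k)\<^sup>2 + eta * (norm k)\<^sup>2 = (norm x)\<^sup>2"
        using nx unfolding eta_def by (simp add: algebra_simps)
      moreover have "e\<^sup>2 * (M * norm x)\<^sup>2 + 4 * e\<^sup>2 * M\<^sup>2 * (norm x)\<^sup>2 / eta = D * e\<^sup>2 * (norm x)\<^sup>2"
        unfolding D_def by (simp add: algebra_simps power_mult_distrib add_divide_distrib)
      ultimately show ?thesis using amgm by linarith
    qed
    also have "\<dots> \<le> ((1 + D * e\<^sup>2) * norm x)\<^sup>2"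
    proof -
      have a0: "0 \<le> D * e\<^sup>2" using D0 by simp
      have "1 + D * e\<^sup>2 \<le> (1 + D * e\<^sup>2)\<^sup>2"
        using a0 mult_nonneg_nonneg[OF a0 a0] by (simp add: power2_eq_square algebra_simps)
      hence "(1 + D * e\<^sup>2) * (norm x)\<^sup>2 \<le> (1 + D * e\<^sup>2)\<^sup>2 * (norm x)\<^sup>2"
        by (rule mult_right_mono) simp
      moreover have "((1 + D * e\<^sup>2) * norm x)\<^sup>2 = (1 + D * e\<^sup>2)\<^sup>2 * (norm x)\<^sup>2"
        by (simp only: power_mult_distrib)
      moreover have "(norm x)\<^sup>2 + D * e\<^sup>2 * (norm x)\<^sup>2 = (1 + D * e\<^sup>2) * (norm x)\<^sup>2"
        by (simp add: algebra_simps)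
      ultimately show ?thesis by linarith
    qed
    finally have "(norm ((T + e *\<^sub>R Y) x))\<^sup>2 \<le> ((1 + D * e\<^sup>2) * norm x)\<^sup>2" .
    moreover have "0 \<le> (1 + D * e\<^sup>2) * norm x" using D0 by simp
    ultimately show ?thesis by (rule power2_le_imp_le)
  qed
  show ?thesis
  proof (intro exI allI)
    fix e
    show "norm (T + e *\<^sub>R Y) \<le> 1 + D * e\<^sup>2"
      by (rule norm_blinfun_bound) (use D0 main in auto)
  qed
qed


lemma restr_bound:
  fixes T :: "'a::real_normed_vector \<Rightarrow>\<^sub>L 'b::real_normed_vector"
  assumes V: "\<And>x r. x \<in> V \<Longrightarrow> r *\<^sub>R x \<in> V" and k: "k \<in> V"
  shows "norm (T k) \<le> restr_norm (blinfun_apply T) V * norm k"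
proof (cases "k = 0")
  case True thus ?thesis by simp
next
  case False
  define u where "u = (1 / norm k) *\<^sub>R k"
  have uV: "u \<in> V" unfolding u_def by (rule V[OF k])
  have nu: "norm u = 1" unfolding u_def using False by simp
  have bdd: "bdd_above {norm (T x) | x. x \<in> V \<and> norm x \<le> 1}"
  proof (rule bdd_aboveI[of _ "norm T"])
    fix y assume "y \<in> {norm (T x) | x. x \<in> V \<and> norm x \<le> 1}"
    then obtain x where x: "y = norm (T x)" "norm x \<le> 1" by auto
    have "norm (T x) \<le> norm T * norm x" by (rule norm_blinfun)
    also have "\<dots> \<le> norm T * 1" using x(2) by (intro mult_left_mono) auto
    finally show "y \<le> norm T" using x by simp
  qed
  have "norm (T u) \<le> restr_norm (blinfun_apply T) V"
    unfolding restr_norm_def using uV nu by (intro cSup_upper[OF _ bdd]) auto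
  moreover have "T k = norm k *\<^sub>R T u"
    unfolding u_def blinfun.scaleR_right using False by simp
  ultimately show ?thesis by (simp add: mult.commute mult_left_mono)
qed

lemma span_insert_cong:
  fixes A A' :: "'a::real_vector set"
  assumes "span A = span A'"
  shows "span (insert b A) = span (insert b A')"
  unfolding span_eq
proof
  show "insert b A \<subseteq> span (insert b A')"
    using assms span_superset[of A] span_mono[of A' "insert b A'"]
    by (auto intro: span_base)
  show "insert b A' \<subseteq> span (insert b A)"
    using assms span_superset[of A'] span_mono[of A "insert b A"]
    by (auto intro: span_base)
qed

lemma gs_real:
  fixes B :: "'a::real_inner set"
  assumes "finite B" "independent B"
  shows "\<exists>e. (\<forall>i<card B. \<forall>j<card B. e i \<bullet> e j = (if i = j then 1 else 0)) \<and>
             span (e ` {..<card B}) = span B"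
  using assms
proof (induction B rule: finite_induct)
  case empty
  show ?case by simp
next
  case (insert b B)
  have indB: "independent B" and bB: "b \<notin> span B"
    using insert.prems insert.hyps(2) by (auto simp: independent_insert)
  obtain e where orth: "\<forall>i<card B. \<forall>j<card B. e i \<bullet> e j = (if i = j then 1 else 0)"
    and sp: "span (e ` {..<card B}) = span B"
    using insert.IH[OF indB] by blast
  define m where "m = card B"
  define w where "w = b - (\<Sum>i<m. (b \<bullet> e i) *\<^sub>R e i)"
  have sumin: "(\<Sum>i<m. (b \<bullet> e i) *\<^sub>R e i) \<in> span (e ` {..<m})"
    by (intro span_sum span_scale span_base) auto
  have w0: "w \<noteq> 0"
  proof
    assume "w = 0"
    hence "b = (\<Sum>i<m. (b \<bullet> e i) *\<^sub>R e i)" unfolding w_def by simp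
    hence "b \<in> span B" using sumin sp unfolding m_def by simp
    thus False using bB by simp
  qed
  have we: "w \<bullet> e j = 0" if "j < m" for j
  proof -
    have "(\<Sum>i<m. (b \<bullet> e i) *\<^sub>R e i) \<bullet> e j = (\<Sum>i<m. if i = j then b \<bullet> e i else 0)"
      unfolding inner_sum_left using orth that unfolding m_def by (intro sum.cong) auto
    also have "\<dots> = b \<bullet> e j" using that by (simp add: sum.delta)
    finally show ?thesis unfolding w_def by (simp add: inner_diff_left)
  qed
  define e' where "e' = e(m := (1 / norm w) *\<^sub>R w)"
  have cardi: "card (insert b B) = Suc m" unfolding m_def using insert.hyps by simp
  have "\<forall>i<Suc m. \<forall>j<Suc m. e' i \<bullet> e' j = (if i = j then 1 else 0)"
  proof (intro allI impI)
    fix i j assume i: "i < Suc m" and j: "j < Suc m"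
    show "e' i \<bullet> e' j = (if i = j then 1 else 0)"
    proof (cases "i = m")
      case True
      show ?thesis
      proof (cases "j = m")
        case True
        with \<open>i = m\<close> show ?thesis using w0 unfolding e'_def
          by (simp add: dot_square_norm power2_eq_square)
      next
        case False
        with \<open>i = m\<close> j show ?thesis using we[of j] unfolding e'_def by simp
      qed
    next
      case False
      show ?thesis
      proof (cases "j = m")
        case True
        with \<open>i \<noteq> m\<close> i show ?thesis using we[of i] unfolding e'_def by (simp add: inner_commute)
      next
        case False
        with \<open>i \<noteq> m\<close> i j show ?thesis using orth unfolding e'_def m_def by simp
      qed
    qed
  qed
  moreover have "span (e' ` {..<Suc m}) = span (insert b B)"
  proof -
    have im: "e' ` {..<Suc m} = insert ((1 / norm w) *\<^sub>R w) (e ` {..<m})"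
      unfolding e'_def lessThan_Suc by auto
    have "span (insert ((1 / norm w) *\<^sub>R w) (e ` {..<m})) = span (insert b (e ` {..<m}))"
      unfolding span_eq
    proof
      show "insert ((1 / norm w) *\<^sub>R w) (e ` {..<m}) \<subseteq> span (insert b (e ` {..<m}))"
      proof -
        have "w \<in> span (insert b (e ` {..<m}))"
          unfolding w_def using sumin span_mono[of "e ` {..<m}" "insert b (e ` {..<m})"]
          by (intro span_diff) (auto intro: span_base)
        thus ?thesis by (auto intro: span_base span_scale)
      qed
      show "insert b (e ` {..<m}) \<subseteq> span (insert ((1 / norm w) *\<^sub>R w) (e ` {..<m}))"
      proof -
        have "b = norm w *\<^sub>R ((1 / norm w) *\<^sub>R w) + (\<Sum>i<m. (b \<bullet> e i) *\<^sub>R e i)"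
          using w0 unfolding w_def by simp
        moreover have "norm w *\<^sub>R ((1 / norm w) *\<^sub>R w) \<in> span (insert ((1 / norm w) *\<^sub>R w) (e ` {..<m}))"
          by (intro span_scale span_base) simp
        moreover have "(\<Sum>i<m. (b \<bullet> e i) *\<^sub>R e i) \<in> span (insert ((1 / norm w) *\<^sub>R w) (e ` {..<m}))"
          using sumin span_mono[of "e ` {..<m}" "insert ((1 / norm w) *\<^sub>R w) (e ` {..<m})"] by auto
        ultimately have "b \<in> span (insert ((1 / norm w) *\<^sub>R w) (e ` {..<m}))"
          by (metis span_add)
        thus ?thesis by (auto intro: span_base)
      qed
    qed
    also have "\<dots> = span (insert b B)"
      using span_insert_cong[OF sp] unfolding m_def by simp
    finally show ?thesis using im by simp
  qed
  ultimately show ?case unfolding cardi by blast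
qed

lemma card_pairs_le:
  "card {(i, j). i \<le> j \<and> j < (n::nat)} = (n + 1) choose 2"
proof (induction n)
  case 0
  show ?case by simp
next
  case (Suc n)
  have eq: "{(i, j). i \<le> j \<and> j < Suc n} = {(i, j). i \<le> j \<and> j < n} \<union> (\<lambda>i. (i, n)) ` {..n}"
    by auto
  have fin: "finite {(i, j). i \<le> j \<and> (j::nat) < n}"
    by (rule finite_subset[of _ "{..<n} \<times> {..<n}"]) auto
  have disj: "{(i, j). i \<le> j \<and> j < n} \<inter> (\<lambda>i. (i, n)) ` {..n} = {}" by auto
  have "card {(i, j). i \<le> j \<and> j < Suc n} = card {(i, j). i \<le> j \<and> j < n} + card ((\<lambda>i. (i, n)) ` {..n})"
    unfolding eq using fin disj by (intro card_Un_disjoint) auto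
  also have "card ((\<lambda>i. (i, n)) ` {..n}) = Suc n"
    by (subst card_image) (auto simp: inj_on_def)
  finally show ?case using Suc.IH by (simp add: numeral_2_eq_2)
qed

definition bil :: "('a::real_normed_vector \<Rightarrow>\<^sub>L 'b::real_inner) \<Rightarrow> 'a \<Rightarrow> 'a \<Rightarrow> (('a \<Rightarrow>\<^sub>L 'b) \<Rightarrow>\<^sub>L real)"
  where "bil T u v = Blinfun (\<lambda>A. T u \<bullet> blinfun_apply A v)"

lemma bil_apply [simp]: "blinfun_apply (bil T u v) A = T u \<bullet> A v"
proof -
  have "bounded_linear (\<lambda>A. T u \<bullet> blinfun_apply A v)"
    by (rule bounded_linear_compose[OF bounded_linear_inner_right blinfun.bounded_linear_left])
  thus ?thesis unfolding bil_def by (simp add: bounded_linear_Blinfun_apply)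
qed

definition rk :: "('a::real_inner \<Rightarrow>\<^sub>L 'b::real_normed_vector) \<Rightarrow> 'a \<Rightarrow> 'a \<Rightarrow> ('a \<Rightarrow>\<^sub>L 'b)"
  where "rk T u v = Blinfun (\<lambda>z. (z \<bullet> v) *\<^sub>R T u)"

lemma rk_apply [simp]: "blinfun_apply (rk T u v) z = (z \<bullet> v) *\<^sub>R T u"
proof -
  have "bounded_linear (\<lambda>z. (z \<bullet> v) *\<^sub>R blinfun_apply T u)"
    by (rule bounded_linear_compose[OF bounded_linear_scaleR_left bounded_linear_inner_left])
  thus ?thesis unfolding rk_def by (simp add: bounded_linear_Blinfun_apply)
qed


lemma real_part:
  fixes T :: "'c::{real_inner, complete_space} \<Rightarrow>\<^sub>L 'd::{real_inner, complete_space}"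
    and H0 :: "'c set" and n :: nat
  assumes nT: "norm T = 1" and sH: "subspace H0"
    and Bex: "\<exists>B. finite B \<and> independent B \<and> span B = H0 \<and> card B = n"
    and MT: "norm_attain_set T = {x \<in> H0. norm x = 1}"
    and rn: "restr_norm (blinfun_apply T) (orthogonal_comp H0) < 1"
  shows "k_smooth T ((n + 1) choose 2)"
proof -
  obtain B where B: "finite B" "independent B" "span B = H0" "card B = n" using Bex by blast
  obtain e where orth: "\<And>i j. i < n \<Longrightarrow> j < n \<Longrightarrow> e i \<bullet> e j = (if i = j then 1 else 0)"
    and spE: "span (e ` {..<n}) = H0"
    using gs_real[OF B(1,2)] B(3,4) by auto
  define E where "E = e ` {..<n}"
  have eH: "e i \<in> H0" if "i < n" for i
    using spE span_base[of "e i" E] that unfolding E_def by auto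
  have iso: "norm (T h) = norm h" if h: "h \<in> H0" for h
  proof (cases "h = 0")
    case True thus ?thesis by simp
  next
    case False
    define u where "u = (1 / norm h) *\<^sub>R h"
    have "u \<in> H0" unfolding u_def using sH h by (simp add: subspace_scale)
    moreover have "norm u = 1" unfolding u_def using False by simp
    ultimately have "u \<in> norm_attain_set T" using MT by simp
    hence "norm (T u) = 1" using nT unfolding norm_attain_set_def by simp
    moreover have "T h = norm h *\<^sub>R T u" unfolding u_def blinfun.scaleR_right using False by simp
    ultimately show ?thesis by simp
  qed
  have ip: "T u \<bullet> T v = u \<bullet> v" if "u \<in> H0" "v \<in> H0" for u v
  proof -
    have "u + v \<in> H0" using that sH by (simp add: subspace_add)
    hence "(norm (T (u + v)))\<^sup>2 = (norm (u + v))\<^sup>2" using iso by simp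
    moreover have "(norm (T u))\<^sup>2 = (norm u)\<^sup>2" "(norm (T v))\<^sup>2 = (norm v)\<^sup>2" using iso that by auto
    ultimately show ?thesis
      unfolding power2_norm_eq_inner blinfun.add_right
      by (simp add: inner_add_left inner_add_right inner_commute)
  qed
  have Teij: "T (e i) \<bullet> T (e j) = (if i = j then 1 else 0)" if "i < n" "j < n" for i j
    using ip[OF eH eH] orth that by simp
  define P where "P x = (\<Sum>i<n. (x \<bullet> e i) *\<^sub>R e i)" for x
  have PH: "P x \<in> H0" for x
    unfolding P_def using sH eH by (intro subspace_sum subspace_scale) auto
  have Qe: "e j \<bullet> (x - P x) = 0" if "j < n" for x j
  proof -
    have "e j \<bullet> P x = (\<Sum>i<n. if i = j then x \<bullet> e i else 0)"
      unfolding P_def inner_sum_right using orth that by (intro sum.cong) (auto simp: inner_commute)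
    also have "\<dots> = x \<bullet> e j" using that by (simp add: sum.delta)
    finally show ?thesis by (simp add: inner_diff_right inner_commute)
  qed
  have QO: "x - P x \<in> orthogonal_comp H0" for x
  proof -
    have "orthogonal (x - P x) y" if "y \<in> H0" for y
      using that unfolding spE[symmetric]
      by (rule orthogonal_to_span) (use Qe in \<open>auto simp: orthogonal_def inner_commute\<close>)
    thus ?thesis unfolding orthogonal_comp_def by (auto simp: orthogonal_commute)
  qed
  have QH: "h \<bullet> (x - P x) = 0" if "h \<in> H0" for h x
    using QO that unfolding orthogonal_comp_def orthogonal_def by auto
  define c where "c = max 0 (restr_norm (blinfun_apply T) (orthogonal_comp H0))"
  have c0: "0 \<le> c" and c1: "c < 1" unfolding c_def using rn by auto
  have small: "norm (T (x - P x)) \<le> c * norm (x - P x)" for x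
  proof -
    have "norm (T (x - P x)) \<le> restr_norm (blinfun_apply T) (orthogonal_comp H0) * norm (x - P x)"
      by (rule restr_bound[OF _ QO]) (simp add: subspace_orthogonal_comp subspace_scale)
    also have "\<dots> \<le> c * norm (x - P x)" unfolding c_def by (intro mult_right_mono) auto
    finally show ?thesis .
  qed
  have cross: "T (P x) \<bullet> T (x - P x) = 0" for x
    by (rule cross_zero) (use nT iso[OF PH] QH[OF PH] in auto)
  define I where "I = {(i, j). i \<le> j \<and> j < n}"
  have finI: "finite I" unfolding I_def
    by (rule finite_subset[of _ "{..<n} \<times> {..<n}"]) auto
  define phi where "phi p = bil T (e (fst p)) (e (snd p)) + bil T (e (snd p)) (e (fst p))" for p
  have phi_apply: "phi (i, j) A = T (e i) \<bullet> A (e j) + T (e j) \<bullet> A (e i)" for i j A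
    unfolding phi_def by (simp add: blinfun.add_left)
  define G where "G p = (if fst p = snd p then 1 / 2 else 1) *\<^sub>R rk T (e (fst p)) (e (snd p))" for p
  have dual: "phi q (G p) = (if q = p then 1 else 0)" if "p \<in> I" "q \<in> I" for p q
  proof -
    obtain i j where p: "p = (i, j)" by (cases p)
    obtain k l where q: "q = (k, l)" by (cases q)
    have ij: "i \<le> j" "j < n" and kl: "k \<le> l" "l < n" using that p q unfolding I_def by auto
    have "phi q (G p) = (if i = j then 1 / 2 else 1) * ((e l \<bullet> e j) * (T (e k) \<bullet> T (e i)) + (e k \<bullet> e j) * (T (e l) \<bullet> T (e i)))"
      unfolding p q phi_apply G_def by (simp add: blinfun.scaleR_left algebra_simps)
    also have "\<dots> = (if q = p then 1 else 0)"
      using ij kl unfolding p q by (auto simp: orth Teij)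
    finally show ?thesis .
  qed
  have injphi: "inj_on phi I"
  proof (rule inj_onI)
    fix p q assume pq: "p \<in> I" "q \<in> I" "phi p = phi q"
    have "phi q (G p) = 1" using dual[OF pq(1) pq(1)] pq(3) by simp
    thus "p = q" using dual[OF pq(1) pq(2)] by (auto split: if_splits)
  qed
  have cardB: "card (phi ` I) = (n + 1) choose 2"
    using card_image[OF injphi] card_pairs_le[of n] unfolding I_def by simp
  have indep: "independent (phi ` I)"
  proof -
    have "\<not> (\<exists>u. (\<exists>v \<in> phi ` I. u v \<noteq> 0) \<and> (\<Sum>v\<in>phi ` I. u v *\<^sub>R v) = 0)"
    proof
      assume "\<exists>u. (\<exists>v \<in> phi ` I. u v \<noteq> 0) \<and> (\<Sum>v\<in>phi ` I. u v *\<^sub>R v) = 0"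
      then obtain u q where q: "q \<in> I" "u (phi q) \<noteq> 0" and s: "(\<Sum>v\<in>phi ` I. u v *\<^sub>R v) = 0"
        by auto
      have "0 = blinfun_apply (\<Sum>v\<in>phi ` I. u v *\<^sub>R v) (G q)" using s by simp
      also have "\<dots> = (\<Sum>p\<in>I. u (phi p) * phi p (G q))"
        by (simp add: blinfun.sum_left blinfun.scaleR_left sum.reindex[OF injphi])
      also have "\<dots> = (\<Sum>p\<in>I. if p = q then u (phi p) else 0)"
        using dual q(1) by (intro sum.cong) auto
      also have "\<dots> = u (phi q)" using q(1) finI by (simp add: sum.delta')
      finally show False using q(2) by simp
    qed
    thus ?thesis using dependent_finite[of "phi ` I"] finI by auto
  qed
  have psi_supp: "bil T v v \<in> span (supp_funcs T)" if v: "v \<in> H0" for v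
  proof (cases "v = 0")
    case True
    have "bil T v v = 0" by (rule blinfun_eqI) (simp add: True)
    thus ?thesis by (simp add: span_zero)
  next
    case False
    define u where "u = (1 / norm v) *\<^sub>R v"
    have uH: "u \<in> H0" unfolding u_def using sH v by (simp add: subspace_scale)
    have nu: "norm u = 1" unfolding u_def using False by simp
    have Tu: "norm (T u) = 1" using iso[OF uH] nu by simp
    have "bil T u u \<in> supp_funcs T"
    proof -
      have le: "norm (bil T u u) \<le> 1"
      proof (rule norm_blinfun_bound)
        fix A :: "'c \<Rightarrow>\<^sub>L 'd"
        have "norm (bil T u u A) = \<bar>T u \<bullet> A u\<bar>" by simp
        also have "\<dots> \<le> norm (T u) * norm (A u)" by (rule Cauchy_Schwarz_ineq2)
        also have "\<dots> \<le> 1 * (norm A * norm u)" using Tu by (simp add: norm_blinfun)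
        finally show "norm (bil T u u A) \<le> 1 * norm A" using nu by simp
      qed simp
      have val: "bil T u u T = 1" using Tu by (simp add: dot_square_norm)
      have "1 \<le> norm (bil T u u)"
        using norm_blinfun[of "bil T u u" T] val nT by simp
      with le val show ?thesis unfolding supp_funcs_def by simp
    qed
    moreover have "bil T v v = (norm v)\<^sup>2 *\<^sub>R bil T u u"
    proof (rule blinfun_eqI)
      fix A :: "'c \<Rightarrow>\<^sub>L 'd"
      have "T u \<bullet> A u = (1 / norm v)\<^sup>2 * (T v \<bullet> A v)"
        unfolding u_def blinfun.scaleR_right by (simp add: power2_eq_square)
      moreover have "(norm v)\<^sup>2 * (1 / norm v)\<^sup>2 = 1" using False by (simp add: field_simps)
      ultimately show "bil T v v A = ((norm v)\<^sup>2 *\<^sub>R bil T u u) A"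
        by (simp add: blinfun.scaleR_left mult.assoc[symmetric])
    qed
    ultimately show ?thesis by (simp add: span_base span_scale)
  qed
  have phi_span: "phi p \<in> span (supp_funcs T)" if "p \<in> I" for p
  proof -
    obtain i j where p: "p = (i, j)" by (cases p)
    have ij: "i < n" "j < n" using that p unfolding I_def by auto
    have "phi p = (1 / 2) *\<^sub>R (bil T (e i + e j) (e i + e j) - bil T (e i - e j) (e i - e j))"
      by (rule blinfun_eqI)
        (simp add: p phi_apply blinfun.scaleR_left blinfun.diff_left blinfun.add_right blinfun.diff_right
          inner_add_left inner_add_right inner_diff_left inner_diff_right algebra_simps)
    moreover have "e i + e j \<in> H0" "e i - e j \<in> H0" using eH ij sH by (auto simp: subspace_add subspace_diff)
    ultimately show ?thesis using psi_supp by (simp add: span_diff span_scale)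
  qed
  have supp_span: "f \<in> span (phi ` I)" if f: "f \<in> supp_funcs T" for f
  proof -
    have nf: "norm f = 1" and fT: "f T = 1" using f unfolding supp_funcs_def by auto
    have fA: "f A = (\<Sum>p\<in>I. f (G p) * phi p A)" for A
    proof -
      define Y where "Y = A - (\<Sum>p\<in>I. phi p A *\<^sub>R G p)"
      have phiY: "phi q Y = 0" if q: "q \<in> I" for q
      proof -
        have "phi q Y = phi q A - (\<Sum>p\<in>I. phi p A * phi q (G p))"
          unfolding Y_def by (simp add: blinfun.diff_right blinfun.sum_right blinfun.scaleR_right)
        also have "(\<Sum>p\<in>I. phi p A * phi q (G p)) = (\<Sum>p\<in>I. if p = q then phi p A else 0)"
          using dual q by (intro sum.cong) auto
        also have "\<dots> = phi q A" using q finI by (simp add: sum.delta')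
        finally show ?thesis by simp
      qed
      have phiY2: "T (e i) \<bullet> Y (e j) + T (e j) \<bullet> Y (e i) = 0" if "i < n" "j < n" for i j
      proof (cases "i \<le> j")
        case True
        thus ?thesis using phiY[of "(i, j)"] that unfolding I_def phi_apply by simp
      next
        case False
        thus ?thesis using phiY[of "(j, i)"] that unfolding I_def phi_apply by (simp add: add.commute)
      qed
      have bl: "bilinear (\<lambda>u v. T u \<bullet> Y v + T v \<bullet> Y u)"
        unfolding bilinear_def
        by (auto intro!: linearI simp: blinfun.add_right blinfun.scaleR_right inner_add_left inner_add_right algebra_simps)
      have bl0: "bilinear (\<lambda>u v. 0::real)" unfolding bilinear_def by (auto intro!: linearI)
      have YH: "T h \<bullet> Y h = 0" if "h \<in> H0" for h
      proof -
        have "T h \<bullet> Y h + T h \<bullet> Y h = 0"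
          using bilinear_eq[OF bl bl0, of H0 E H0 E h h] that spE phiY2 unfolding E_def by auto
        thus ?thesis by simp
      qed
      obtain D where D: "\<And>t. norm (T + t *\<^sub>R Y) \<le> 1 + D * t\<^sup>2"
        using core_bound[OF nT iso[OF PH] QH[OF PH] small c0 c1 cross YH[OF PH]] by blast
      have "t * f Y \<le> D * t\<^sup>2" for t
      proof -
        have "f (T + t *\<^sub>R Y) \<le> norm f * norm (T + t *\<^sub>R Y)"
          using norm_blinfun[of f "T + t *\<^sub>R Y"] by simp
        also have "\<dots> \<le> 1 + D * t\<^sup>2" using nf D by simp
        finally show ?thesis using fT by (simp add: blinfun.add_right blinfun.scaleR_right)
      qed
      hence fY: "f Y = 0" by (rule lin_quad_zero)
      have "f A = f Y + (\<Sum>p\<in>I. phi p A * f (G p))"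
        unfolding Y_def by (simp add: blinfun.diff_right blinfun.sum_right blinfun.scaleR_right)
      moreover have "(\<Sum>p\<in>I. phi p A * f (G p)) = (\<Sum>p\<in>I. f (G p) * phi p A)"
        by (rule sum.cong[OF refl]) (rule mult.commute)
      ultimately show ?thesis using fY by simp
    qed
    have "f = (\<Sum>p\<in>I. f (G p) *\<^sub>R phi p)"
    proof (rule blinfun_eqI)
      fix A
      show "f A = (\<Sum>p\<in>I. f (G p) *\<^sub>R phi p) A"
        unfolding fA[of A] by (simp add: blinfun.sum_left blinfun.scaleR_left)
    qed
    also have "\<dots> \<in> span (phi ` I)"
      by (intro span_sum span_scale span_base) auto
    finally show ?thesis .
  qed
  have "span (phi ` I) = span (supp_funcs T)"
    unfolding span_eq using phi_span supp_span by auto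
  thus ?thesis unfolding k_smooth_def using nT finI indep cardB by blast
qed


interpretation cs: vector_space "scaleC :: complex \<Rightarrow> 'a \<Rightarrow> 'a::complex_hilbert"
  by (rule vector_space_scaleC)

interpretation fs: vector_space "fscale :: complex \<Rightarrow> ('z \<Rightarrow> complex) \<Rightarrow> 'z \<Rightarrow> complex"
  by unfold_locales (auto simp: fscale_def algebra_simps fun_eq_iff)

lemma fun_sum_apply: "(\<Sum>x\<in>S. g x) a = (\<Sum>x\<in>S. g x a)"
  by (induction S rule: infinite_finite_induct) auto

lemma fscale_apply [simp]: "fscale c f A = c * f A"
  by (simp add: fscale_def)


lemma scaleC_decomp: "scaleC c x = Re c *\<^sub>R x + Im c *\<^sub>R scaleC \<i> (x::'a::complex_hilbert)"
proof -
  define a where "a = Re c"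
  define b where "b = Im c"
  have c: "c = complex_of_real a + complex_of_real b * \<i>"
    unfolding a_def b_def by (simp add: complex_eq_iff)
  have "scaleC c x = scaleC (complex_of_real a + complex_of_real b * \<i>) x" using c by simp
  also have "\<dots> = scaleC (complex_of_real a) x + scaleC (complex_of_real b * \<i>) x"
    by (rule scaleC_add_left)
  also have "\<dots> = scaleC (complex_of_real a) x + scaleC (complex_of_real b) (scaleC \<i> x)"
    by (simp only: scaleC_scaleC)
  finally show ?thesis unfolding a_def[symmetric] b_def[symmetric] by (simp only: scaleC_of_real)
qed

lemma scaleC_ii: "scaleC \<i> (scaleC \<i> x) = - (x::'a::complex_hilbert)"
proof -
  have "scaleC \<i> (scaleC \<i> x) = scaleC (complex_of_real (-1)) x" by (simp add: scaleC_scaleC)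
  thus ?thesis by (simp add: scaleC_of_real)
qed

lemma scaleC_scaleR: "scaleC c (r *\<^sub>R x) = r *\<^sub>R scaleC c (x::'a::complex_hilbert)"
proof -
  have "scaleC c (r *\<^sub>R x) = scaleC c (scaleC (complex_of_real r) x)" by (simp add: scaleC_of_real)
  also have "\<dots> = scaleC (complex_of_real r) (scaleC c x)" by (simp only: scaleC_scaleC mult.commute[of c])
  also have "\<dots> = r *\<^sub>R scaleC c x" by (simp only: scaleC_of_real)
  finally show ?thesis .
qed

lemma scaleC_add: "scaleC c (x + y) = scaleC c x + scaleC c (y::'a::complex_hilbert)"
  by (rule scaleC_add_right)

lemma scaleC_diff: "scaleC c (x - y) = scaleC c x - scaleC c (y::'a::complex_hilbert)"
  using scaleC_add_right[of c "x - y" y] by (simp add: eq_diff_eq)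

lemma scaleC_minus: "scaleC c (- y) = - scaleC c (y::'a::complex_hilbert)"
  using scaleC_diff[of c 0 y] by (simp add: scaleC_of_real[of 0, simplified])

lemma scaleC_zero [simp]: "scaleC c (0::'a::complex_hilbert) = 0"
  using scaleC_diff[of c 0 0] by simp

lemma linear_scaleC: "linear (scaleC c :: 'a::complex_hilbert \<Rightarrow> 'a)"
  by (rule linearI) (simp_all add: scaleC_add scaleC_scaleR)

lemma inner_ii_left: "inner (scaleC \<i> x) y = - inner x (scaleC \<i> (y::'a::complex_hilbert))"
proof -
  have "inner (scaleC \<i> x) y = inner (scaleC \<i> (scaleC \<i> x)) (scaleC \<i> y)" by (rule inner_scaleC_ii[symmetric])
  thus ?thesis by (simp add: scaleC_ii)
qed

lemma inner_ii_self: "inner x (scaleC \<i> (x::'a::complex_hilbert)) = 0"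
  using inner_ii_left[of x x] by (simp add: inner_commute)

lemma norm_ii: "norm (scaleC \<i> (x::'a::complex_hilbert)) = norm x"
  by (simp add: norm_eq_sqrt_inner inner_scaleC_ii)

lemma bounded_linear_scaleC: "bounded_linear (scaleC c :: 'a::complex_hilbert \<Rightarrow> 'a)"
proof -
  have "bounded_linear (\<lambda>x::'a. Re c *\<^sub>R x + Im c *\<^sub>R scaleC \<i> x)"
  proof (rule bounded_linear_add)
    show "bounded_linear (\<lambda>x::'a. Re c *\<^sub>R x)" by (rule bounded_linear_scaleR_right)
    have "bounded_linear (scaleC \<i> :: 'a \<Rightarrow> 'a)"
      by (rule bounded_linear_intro[where K=1]) (simp_all add: scaleC_add scaleC_scaleR norm_ii)
    thus "bounded_linear (\<lambda>x::'a. Im c *\<^sub>R scaleC \<i> x)"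
      by (rule bounded_linear_compose[OF bounded_linear_scaleR_right])
  qed
  moreover have "scaleC c = (\<lambda>x::'a. Re c *\<^sub>R x + Im c *\<^sub>R scaleC \<i> x)"
    by (rule ext) (rule scaleC_decomp)
  ultimately show ?thesis by simp
qed

lemma cinner_Re: "Re (cinner x y) = inner x y" by (simp add: cinner_def)
lemma cinner_Im: "Im (cinner x y) = inner x (scaleC \<i> y)" by (simp add: cinner_def)

lemma cinner_add_left: "cinner (x + y) z = cinner x z + cinner y (z::'a::complex_hilbert)"
  by (simp add: cinner_def complex_eq_iff inner_add_left)
lemma cinner_add_right: "cinner z (x + y) = cinner z x + cinner z (y::'a::complex_hilbert)"
  by (simp add: cinner_def complex_eq_iff inner_add_right scaleC_add)
lemma cinner_diff_left: "cinner (x - y) z = cinner x z - cinner y (z::'a::complex_hilbert)"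
  by (simp add: cinner_def complex_eq_iff inner_diff_left)
lemma cinner_diff_right: "cinner z (x - y) = cinner z x - cinner z (y::'a::complex_hilbert)"
  by (simp add: cinner_def complex_eq_iff inner_diff_right scaleC_diff)
lemma cinner_scaleR_left: "cinner (r *\<^sub>R x) z = complex_of_real r * cinner x (z::'a::complex_hilbert)"
  by (simp add: cinner_def complex_eq_iff)
lemma cinner_scaleR_right: "cinner z (r *\<^sub>R x) = complex_of_real r * cinner z (x::'a::complex_hilbert)"
  by (simp add: cinner_def complex_eq_iff scaleC_scaleR)
lemma cinner_zero_left [simp]: "cinner 0 (x::'a::complex_hilbert) = 0"
  by (simp add: cinner_def complex_eq_iff)
lemma cinner_zero_right [simp]: "cinner x (0::'a::complex_hilbert) = 0"
  by (simp add: cinner_def complex_eq_iff)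

lemma cinner_ii_left: "cinner (scaleC \<i> x) z = \<i> * cinner x (z::'a::complex_hilbert)"
  by (simp add: cinner_def complex_eq_iff inner_ii_left)
lemma cinner_ii_right: "cinner z (scaleC \<i> x) = - \<i> * cinner z (x::'a::complex_hilbert)"
  by (simp add: cinner_def complex_eq_iff scaleC_ii)

lemma cinner_scaleC_left: "cinner (scaleC c x) z = c * cinner x (z::'a::complex_hilbert)"
proof -
  have "cinner (scaleC c x) z = complex_of_real (Re c) * cinner x z + complex_of_real (Im c) * (\<i> * cinner x z)"
    by (simp add: scaleC_decomp[of c x] cinner_add_left cinner_scaleR_left cinner_ii_left)
  also have "\<dots> = c * cinner x z" by (simp add: complex_eq_iff)
  finally show ?thesis .
qed

lemma cinner_scaleC_right: "cinner z (scaleC c x) = cnj c * cinner z (x::'a::complex_hilbert)"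
proof -
  have "cinner z (scaleC c x) = complex_of_real (Re c) * cinner z x + complex_of_real (Im c) * (- \<i> * cinner z x)"
    by (simp add: scaleC_decomp[of c x] cinner_add_right cinner_scaleR_right cinner_ii_right)
  also have "\<dots> = cnj c * cinner z x" by (simp add: complex_eq_iff)
  finally show ?thesis .
qed

lemma cinner_self: "cinner x x = complex_of_real ((norm (x::'a::complex_hilbert))\<^sup>2)"
  by (simp add: cinner_def complex_eq_iff inner_ii_self dot_square_norm)

lemma cinner_norm: "cmod (cinner x y) \<le> norm x * norm (y::'a::complex_hilbert)"
proof -
  define a where "a = inner x y"
  define b where "b = inner x (scaleC \<i> y)"
  define z where "z = a *\<^sub>R y + b *\<^sub>R scaleC \<i> y"
  have s: "inner x z = a\<^sup>2 + b\<^sup>2"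
    unfolding z_def a_def b_def by (simp add: inner_add_right power2_eq_square)
  have nz: "(norm z)\<^sup>2 = (a\<^sup>2 + b\<^sup>2) * (norm y)\<^sup>2"
    unfolding z_def power2_norm_eq_inner
    by (simp add: inner_add_left inner_add_right inner_ii_self inner_ii_left inner_scaleC_ii power2_eq_square algebra_simps)
  have "a\<^sup>2 + b\<^sup>2 \<le> norm x * norm z" using s Cauchy_Schwarz_ineq2[of x z] by simp
  also have "norm z = sqrt (a\<^sup>2 + b\<^sup>2) * norm y"
    using nz by (metis norm_ge_zero real_sqrt_abs real_sqrt_mult real_sqrt_unique abs_of_nonneg)
  finally have le: "(sqrt (a\<^sup>2 + b\<^sup>2)) * sqrt (a\<^sup>2 + b\<^sup>2) \<le> sqrt (a\<^sup>2 + b\<^sup>2) * (norm x * norm y)"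
    by (simp add: algebra_simps)
  have "sqrt (a\<^sup>2 + b\<^sup>2) \<le> norm x * norm y"
  proof (cases "sqrt (a\<^sup>2 + b\<^sup>2) = 0")
    case True thus ?thesis by simp
  next
    case False
    hence "sqrt (a\<^sup>2 + b\<^sup>2) > 0" by (simp add: sum_power2_gt_zero_iff)
    thus ?thesis using le mult_le_cancel_left_pos by blast
  qed
  thus ?thesis unfolding cmod_def cinner_def a_def b_def by simp
qed

lemma cspan_scaleR: "x \<in> cs.span S \<Longrightarrow> r *\<^sub>R x \<in> cs.span (S::'a::complex_hilbert set)"
  by (metis cs.span_scale scaleC_of_real)

lemma csubspace_real: "cs.subspace S \<Longrightarrow> subspace (S::'a::complex_hilbert set)"
  unfolding subspace_def cs.subspace_def by (metis scaleC_of_real)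


lemma cspan_insert_cong:
  fixes A A' :: "'a::complex_hilbert set"
  assumes "cs.span A = cs.span A'"
  shows "cs.span (insert b A) = cs.span (insert b A')"
  unfolding cs.span_eq
proof
  show "insert b A \<subseteq> cs.span (insert b A')"
    using assms cs.span_superset[of A] cs.span_mono[of A' "insert b A'"]
    by (auto intro: cs.span_base)
  show "insert b A' \<subseteq> cs.span (insert b A)"
    using assms cs.span_superset[of A'] cs.span_mono[of A "insert b A"]
    by (auto intro: cs.span_base)
qed

definition corthonormal :: "(nat \<Rightarrow> 'a::complex_hilbert) \<Rightarrow> nat \<Rightarrow> bool" where
  "corthonormal e m \<longleftrightarrow> (\<forall>i<m. \<forall>j<m. e i \<bullet> e j = (if i = j then 1 else 0) \<and> e i \<bullet> scaleC \<i> (e j) = 0)"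

lemma gs_complex:
  fixes B :: "'a::complex_hilbert set"
  assumes "finite B" "\<not> cs.dependent B"
  shows "\<exists>e. corthonormal e (card B) \<and> cs.span (e ` {..<card B}) = cs.span B"
  using assms
proof (induction B rule: finite_induct)
  case empty
  show ?case by (simp add: corthonormal_def)
next
  case (insert b B)
  have indB: "\<not> cs.dependent B" and bB: "b \<notin> cs.span B"
    using insert.prems insert.hyps(2) by (auto simp: cs.independent_insert)
  obtain e where orth: "corthonormal e (card B)"
    and sp: "cs.span (e ` {..<card B}) = cs.span B"
    using insert.IH[OF indB] by blast
  define m where "m = card B"
  have o1: "e i \<bullet> e j = (if i = j then 1 else 0)" if "i < m" "j < m" for i j
    using orth that unfolding corthonormal_def m_def by auto
  have o2: "e i \<bullet> scaleC \<i> (e j) = 0" if "i < m" "j < m" for i j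
    using orth that unfolding corthonormal_def m_def by auto
  have o3: "scaleC \<i> (e i) \<bullet> e j = 0" if "i < m" "j < m" for i j
    using o2[of j i] that by (simp add: inner_commute)
  have o4: "scaleC \<i> (e i) \<bullet> scaleC \<i> (e j) = (if i = j then 1 else 0)" if "i < m" "j < m" for i j
    using o1[OF that] by (simp add: inner_scaleC_ii)
  define s where "s = (\<Sum>i<m. (b \<bullet> e i) *\<^sub>R e i + (b \<bullet> scaleC \<i> (e i)) *\<^sub>R scaleC \<i> (e i))"
  define w where "w = b - s"
  have sumin: "s \<in> cs.span (e ` {..<m})"
    unfolding s_def
    by (intro cs.span_sum cs.span_add cspan_scaleR cs.span_scale cs.span_base) auto
  have w0: "w \<noteq> 0"
  proof
    assume "w = 0"
    hence "b = s" unfolding w_def by simp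
    hence "b \<in> cs.span B" using sumin sp unfolding m_def by simp
    thus False using bB by simp
  qed
  have we: "w \<bullet> e j = 0" if "j < m" for j
  proof -
    have "s \<bullet> e j = (\<Sum>i<m. if i = j then b \<bullet> e i else 0)"
      unfolding s_def inner_sum_left using o1 o3 that by (intro sum.cong) (auto simp: inner_add_left)
    also have "\<dots> = b \<bullet> e j" using that by (simp add: sum.delta)
    finally show ?thesis unfolding w_def by (simp add: inner_diff_left)
  qed
  have wie: "w \<bullet> scaleC \<i> (e j) = 0" if "j < m" for j
  proof -
    have "s \<bullet> scaleC \<i> (e j) = (\<Sum>i<m. if i = j then b \<bullet> scaleC \<i> (e i) else 0)"
      unfolding s_def inner_sum_left using o2 o4 that by (intro sum.cong) (auto simp: inner_add_left)
    also have "\<dots> = b \<bullet> scaleC \<i> (e j)" using that by (simp add: sum.delta)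
    finally show ?thesis unfolding w_def by (simp add: inner_diff_left)
  qed
  define u where "u = (1 / norm w) *\<^sub>R w"
  have nu: "norm u = 1" unfolding u_def using w0 by simp
  have ue: "u \<bullet> e j = 0" "u \<bullet> scaleC \<i> (e j) = 0" if "j < m" for j
    unfolding u_def using we[OF that] wie[OF that] by auto
  have eu: "e j \<bullet> u = 0" "e j \<bullet> scaleC \<i> u = 0" if "j < m" for j
  proof -
    show "e j \<bullet> u = 0" using ue(1)[OF that] by (simp add: inner_commute)
    have "e j \<bullet> scaleC \<i> u = - (scaleC \<i> (e j) \<bullet> u)" by (simp add: inner_ii_left)
    thus "e j \<bullet> scaleC \<i> u = 0" using ue(2)[OF that] by (simp add: inner_commute)
  qed
  have uu: "u \<bullet> u = 1" "u \<bullet> scaleC \<i> u = 0"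
    using nu by (simp_all add: dot_square_norm inner_ii_self)
  define e' where "e' = e(m := u)"
  have cardi: "card (insert b B) = Suc m" unfolding m_def using insert.hyps by simp
  have "corthonormal e' (Suc m)"
    unfolding corthonormal_def
  proof (intro allI impI)
    fix i j assume i: "i < Suc m" and j: "j < Suc m"
    show "e' i \<bullet> e' j = (if i = j then 1 else 0) \<and> e' i \<bullet> scaleC \<i> (e' j) = 0"
    proof (cases "i = m")
      case True
      show ?thesis
      proof (cases "j = m")
        case True
        with \<open>i = m\<close> show ?thesis using uu unfolding e'_def by simp
      next
        case False
        with \<open>i = m\<close> j show ?thesis using ue[of j] unfolding e'_def by simp
      qed
    next
      case False
      show ?thesis
      proof (cases "j = m")
        case True
        with \<open>i \<noteq> m\<close> i show ?thesis using eu[of i] unfolding e'_def by simp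
      next
        case False
        with \<open>i \<noteq> m\<close> i j show ?thesis using o1 o2 unfolding e'_def by simp
      qed
    qed
  qed
  moreover have "cs.span (e' ` {..<Suc m}) = cs.span (insert b B)"
  proof -
    have im: "e' ` {..<Suc m} = insert u (e ` {..<m})"
      unfolding e'_def lessThan_Suc by auto
    have "cs.span (insert u (e ` {..<m})) = cs.span (insert b (e ` {..<m}))"
      unfolding cs.span_eq
    proof
      show "insert u (e ` {..<m}) \<subseteq> cs.span (insert b (e ` {..<m}))"
      proof -
        have "w \<in> cs.span (insert b (e ` {..<m}))"
          unfolding w_def using sumin cs.span_mono[of "e ` {..<m}" "insert b (e ` {..<m})"]
          by (intro cs.span_diff) (auto intro: cs.span_base)
        hence "u \<in> cs.span (insert b (e ` {..<m}))" unfolding u_def by (rule cspan_scaleR)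
        thus ?thesis by (auto intro: cs.span_base)
      qed
      show "insert b (e ` {..<m}) \<subseteq> cs.span (insert u (e ` {..<m}))"
      proof -
        have "b = norm w *\<^sub>R u + s"
          using w0 unfolding w_def u_def by simp
        moreover have "norm w *\<^sub>R u \<in> cs.span (insert u (e ` {..<m}))"
          by (intro cspan_scaleR cs.span_base) simp
        moreover have "s \<in> cs.span (insert u (e ` {..<m}))"
          using sumin cs.span_mono[of "e ` {..<m}" "insert u (e ` {..<m})"] by auto
        ultimately have "b \<in> cs.span (insert u (e ` {..<m}))"
          by (metis cs.span_add)
        thus ?thesis by (auto intro: cs.span_base)
      qed
    qed
    also have "\<dots> = cs.span (insert b B)"
      using cspan_insert_cong[OF sp] unfolding m_def by simp
    finally show ?thesis using im by simp
  qed
  ultimately show ?case unfolding cardi by blast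
qed


lemma cscaleL_apply: "blinfun_apply (cscaleL c A) = (\<lambda>x. scaleC c (blinfun_apply A x))"
proof -
  have "bounded_linear (\<lambda>x. scaleC c (blinfun_apply A x))"
    by (rule bounded_linear_compose[OF bounded_linear_scaleC blinfun.bounded_linear_right])
  thus ?thesis unfolding cscaleL_def by (simp add: bounded_linear_Blinfun_apply)
qed

lemma cscaleL_real: "cscaleL (complex_of_real r) A = r *\<^sub>R A"
  by (rule blinfun_eqI) (simp add: cscaleL_apply scaleC_of_real blinfun.scaleR_left)

lemma clinear_add: "clinear_op A \<Longrightarrow> clinear_op B \<Longrightarrow> clinear_op (A + B)"
  unfolding clinear_op_def by (simp add: blinfun.add_left scaleC_add)

lemma clinear_diff: "clinear_op A \<Longrightarrow> clinear_op B \<Longrightarrow> clinear_op (A - B)"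
  unfolding clinear_op_def by (simp add: blinfun.diff_left scaleC_diff)

lemma clinear_zero: "clinear_op 0"
  unfolding clinear_op_def by simp

lemma clinear_scaleR: "clinear_op A \<Longrightarrow> clinear_op (r *\<^sub>R A)"
  unfolding clinear_op_def by (simp add: blinfun.scaleR_left scaleC_scaleR)

lemma clinear_cscaleL: "clinear_op A \<Longrightarrow> clinear_op (cscaleL c A)"
  unfolding clinear_op_def cscaleL_apply by (simp add: scaleC_scaleC mult.commute)

lemma clinear_sum: "(\<And>p. p \<in> S \<Longrightarrow> clinear_op (X p)) \<Longrightarrow> clinear_op (\<Sum>p\<in>S. X p)"
  by (induction S rule: infinite_finite_induct) (auto simp: clinear_zero clinear_add)

context
  fixes f :: "('a::complex_hilbert \<Rightarrow>\<^sub>L 'b::complex_hilbert) \<Rightarrow> complex"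
  assumes f: "f \<in> cdual"
begin

lemma cdual_add: "clinear_op A \<Longrightarrow> clinear_op B \<Longrightarrow> f (A + B) = f A + f B"
  using f unfolding cdual_def by blast

lemma cdual_scale: "clinear_op A \<Longrightarrow> f (cscaleL c A) = c * f A"
  using f unfolding cdual_def by blast

lemma cdual_nonlin: "\<not> clinear_op A \<Longrightarrow> f A = 0"
  using f unfolding cdual_def by blast

lemma cdual_zero: "f 0 = 0"
  using cdual_add[OF clinear_zero clinear_zero] by simp

lemma cdual_diff: "clinear_op A \<Longrightarrow> clinear_op B \<Longrightarrow> f (A - B) = f A - f B"
  using cdual_add[of B "A - B"] clinear_diff[of A B] by simp

lemma cdual_sum: "(\<And>p. p \<in> S \<Longrightarrow> clinear_op (X p)) \<Longrightarrow> f (\<Sum>p\<in>S. X p) = (\<Sum>p\<in>S. f (X p))"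
proof (induction S rule: infinite_finite_induct)
  case (infinite S) thus ?case by (simp add: cdual_zero)
next
  case empty thus ?case by (simp add: cdual_zero)
next
  case (insert x F)
  thus ?case by (simp add: cdual_add clinear_sum)
qed

lemma cdual_scaleR: "clinear_op A \<Longrightarrow> f (r *\<^sub>R A) = complex_of_real r * f A"
  using cdual_scale[of A "complex_of_real r"] by (simp add: cscaleL_real)

lemma cdual_bound:
  assumes A: "clinear_op A"
  shows "cmod (f A) \<le> cdual_norm f * norm A"
proof (cases "A = 0")
  case True thus ?thesis by (simp add: cdual_zero)
next
  case False
  obtain K where K: "\<And>B. clinear_op B \<Longrightarrow> cmod (f B) \<le> K * norm B"
    using f unfolding cdual_def by blast
  define A' where "A' = (1 / norm A) *\<^sub>R A"
  have A'l: "clinear_op A'" unfolding A'_def by (rule clinear_scaleR[OF A])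
  have nA': "norm A' = 1" unfolding A'_def using False by simp
  have bdd: "bdd_above {cmod (f B) | B. clinear_op B \<and> norm B \<le> 1}"
  proof (rule bdd_aboveI[of _ "\<bar>K\<bar>"])
    fix y assume "y \<in> {cmod (f B) | B. clinear_op B \<and> norm B \<le> 1}"
    then obtain B where B: "y = cmod (f B)" "clinear_op B" "norm B \<le> 1" by auto
    have "y \<le> K * norm B" using K B by simp
    also have "\<dots> \<le> \<bar>K\<bar> * norm B" by (intro mult_right_mono) auto
    also have "\<dots> \<le> \<bar>K\<bar> * 1" using B(3) by (intro mult_left_mono) auto
    finally show "y \<le> \<bar>K\<bar>" by simp
  qed
  have "cmod (f A') \<le> cdual_norm f"
    unfolding cdual_norm_def using A'l nA' by (intro cSup_upper[OF _ bdd]) auto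
  moreover have "f A' = complex_of_real (1 / norm A) * f A"
    unfolding A'_def by (rule cdual_scaleR[OF A])
  ultimately have "cmod (f A) / norm A \<le> cdual_norm f"
    by (simp add: norm_divide)
  thus ?thesis using False by (simp add: field_simps)
qed

end

definition cfun :: "('a::complex_hilbert \<Rightarrow>\<^sub>L 'b::complex_hilbert) \<Rightarrow> 'a \<Rightarrow> 'a \<Rightarrow> ('a \<Rightarrow>\<^sub>L 'b) \<Rightarrow> complex"
  where "cfun T u v A = (if clinear_op A then cinner (blinfun_apply A u) (blinfun_apply T v) else 0)"

lemma cfun_cdual: "cfun T u v \<in> cdual"
  unfolding cdual_def
proof (intro CollectI conjI allI impI)
  fix A B :: "'a \<Rightarrow>\<^sub>L 'b" assume "clinear_op A" "clinear_op B"
  thus "cfun T u v (A + B) = cfun T u v A + cfun T u v B"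
    unfolding cfun_def by (simp add: clinear_add blinfun.add_left cinner_add_left)
next
  fix c and A :: "'a \<Rightarrow>\<^sub>L 'b" assume "clinear_op A"
  thus "cfun T u v (cscaleL c A) = c * cfun T u v A"
    unfolding cfun_def by (simp add: clinear_cscaleL cscaleL_apply cinner_scaleC_left)
next
  show "\<exists>K. \<forall>A. clinear_op A \<longrightarrow> cmod (cfun T u v A) \<le> K * norm A"
  proof (intro exI allI impI)
    fix A :: "'a \<Rightarrow>\<^sub>L 'b" assume "clinear_op A"
    have "cmod (cfun T u v A) = cmod (cinner (A u) (T v))" using \<open>clinear_op A\<close> unfolding cfun_def by simp
    also have "\<dots> \<le> norm (A u) * norm (T v)" by (rule cinner_norm)
    also have "\<dots> \<le> (norm A * norm u) * norm (T v)" by (intro mult_right_mono norm_blinfun) auto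
    finally show "cmod (cfun T u v A) \<le> (norm u * norm (T v)) * norm A" by (simp add: algebra_simps)
  qed
next
  fix A :: "'a \<Rightarrow>\<^sub>L 'b" assume "\<not> clinear_op A"
  thus "cfun T u v A = 0" unfolding cfun_def by simp
qed

definition cE :: "('a::complex_hilbert \<Rightarrow>\<^sub>L 'b::complex_hilbert) \<Rightarrow> 'a \<Rightarrow> 'a \<Rightarrow> ('a \<Rightarrow>\<^sub>L 'b)"
  where "cE T x y = Blinfun (\<lambda>z. (z \<bullet> y) *\<^sub>R T x + (z \<bullet> scaleC \<i> y) *\<^sub>R scaleC \<i> (T x))"

lemma cE_apply: "blinfun_apply (cE T x y) z = scaleC (cinner z y) (T x)"
proof -
  have "bounded_linear (\<lambda>z. (z \<bullet> y) *\<^sub>R T x + (z \<bullet> scaleC \<i> y) *\<^sub>R scaleC \<i> (T x))"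
    by (intro bounded_linear_add bounded_linear_compose[OF bounded_linear_scaleR_left bounded_linear_inner_left])
  hence "blinfun_apply (cE T x y) z = (z \<bullet> y) *\<^sub>R T x + (z \<bullet> scaleC \<i> y) *\<^sub>R scaleC \<i> (T x)"
    unfolding cE_def by (simp add: bounded_linear_Blinfun_apply)
  also have "\<dots> = scaleC (cinner z y) (T x)"
    by (simp add: scaleC_decomp[of "cinner z y"] cinner_Re cinner_Im)
  finally show ?thesis .
qed

lemma clinear_cE: "clinear_op (cE T x y)"
  unfolding clinear_op_def cE_apply by (simp add: cinner_scaleC_left scaleC_scaleC)


lemma cfun_zero: "cfun T 0 0 = 0"
  by (rule ext) (simp add: cfun_def)

lemma cfun_scaleR: "cfun T (r *\<^sub>R w) (r *\<^sub>R w) = fscale (complex_of_real (r\<^sup>2)) (cfun T w w)"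
  by (rule ext) (simp add: cfun_def blinfun.scaleR_right cinner_scaleR_left cinner_scaleR_right power2_eq_square)

lemma cfun_polar:
  assumes cT: "clinear_op T"
  shows "cfun T x y = fscale (1/4) (cfun T (x + y) (x + y) - cfun T (x - y) (x - y)
     + fscale \<i> (cfun T (x + scaleC \<i> y) (x + scaleC \<i> y)) - fscale \<i> (cfun T (x - scaleC \<i> y) (x - scaleC \<i> y)))"
proof (rule ext)
  fix A
  show "cfun T x y A = fscale (1/4) (cfun T (x + y) (x + y) - cfun T (x - y) (x - y)
     + fscale \<i> (cfun T (x + scaleC \<i> y) (x + scaleC \<i> y)) - fscale \<i> (cfun T (x - scaleC \<i> y) (x - scaleC \<i> y))) A"
  proof (cases "clinear_op A")
    case False thus ?thesis by (simp add: cfun_def)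
  next
    case True
    define a where "a = cinner (A x) (T x)"
    define b where "b = cinner (A x) (T y)"
    define c where "c = cinner (A y) (T x)"
    define d where "d = cinner (A y) (T y)"
    have AT: "A (scaleC \<i> y) = scaleC \<i> (A y)" "T (scaleC \<i> y) = scaleC \<i> (T y)"
      using True cT unfolding clinear_op_def by auto
    have e1: "cinner (A (x + y)) (T (x + y)) = a + b + c + d"
      unfolding a_def b_def c_def d_def by (simp add: blinfun.add_right cinner_add_left cinner_add_right)
    have e2: "cinner (A (x - y)) (T (x - y)) = a - b - c + d"
      unfolding a_def b_def c_def d_def by (simp add: blinfun.diff_right cinner_diff_left cinner_diff_right)
    have e3: "cinner (A (x + scaleC \<i> y)) (T (x + scaleC \<i> y)) = a - \<i> * b + \<i> * c + d"
      unfolding a_def b_def c_def d_def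
      by (simp add: blinfun.add_right AT cinner_add_left cinner_add_right cinner_ii_left cinner_ii_right ring_distribs)
    have e4: "cinner (A (x - scaleC \<i> y)) (T (x - scaleC \<i> y)) = a + \<i> * b - \<i> * c + d"
      unfolding a_def b_def c_def d_def
      by (simp add: blinfun.diff_right AT cinner_diff_left cinner_diff_right cinner_ii_left cinner_ii_right ring_distribs)
    have "cfun T x y A = b" unfolding cfun_def b_def using True by simp
    moreover have "fscale (1/4) (cfun T (x + y) (x + y) - cfun T (x - y) (x - y)
     + fscale \<i> (cfun T (x + scaleC \<i> y) (x + scaleC \<i> y)) - fscale \<i> (cfun T (x - scaleC \<i> y) (x - scaleC \<i> y))) A
      = (1/4) * ((a + b + c + d) - (a - b - c + d) + \<i> * (a - \<i> * b + \<i> * c + d) - \<i> * (a + \<i> * b - \<i> * c + d))"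
      using True by (simp add: cfun_def e1 e2 e3 e4)
    moreover have "(1/4) * ((a + b + c + d) - (a - b - c + d) + \<i> * (a - \<i> * b + \<i> * c + d) - \<i> * (a + \<i> * b - \<i> * c + d)) = b"
      by (simp add: algebra_simps)
    ultimately show ?thesis by metis
  qed
qed

lemma re_zero:
  fixes f :: "('a::complex_hilbert \<Rightarrow>\<^sub>L 'b::complex_hilbert) \<Rightarrow> complex"
  assumes f: "f \<in> cdual" and nf: "cdual_norm f = 1" and fT: "f T = 1" and cT: "clinear_op T"
    and cZ: "clinear_op Z" and D: "\<And>t. norm (T + t *\<^sub>R Z) \<le> 1 + D * t\<^sup>2"
  shows "Re (f Z) = 0"
proof -
  have "t * Re (f Z) \<le> D * t\<^sup>2" for t
  proof -
    have cl: "clinear_op (T + t *\<^sub>R Z)" by (intro clinear_add clinear_scaleR cT cZ)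
    have "f (T + t *\<^sub>R Z) = 1 + complex_of_real t * f Z"
      using cdual_add[OF f cT clinear_scaleR[OF cZ]] cdual_scaleR[OF f cZ] fT by simp
    hence "1 + t * Re (f Z) = Re (f (T + t *\<^sub>R Z))" by simp
    also have "\<dots> \<le> cmod (f (T + t *\<^sub>R Z))" by (rule complex_Re_le_cmod)
    also have "\<dots> \<le> cdual_norm f * norm (T + t *\<^sub>R Z)" by (rule cdual_bound[OF f cl])
    also have "\<dots> \<le> 1 + D * t\<^sup>2" using nf D by simp
    finally show ?thesis by simp
  qed
  thus ?thesis by (rule lin_quad_zero)
qed


lemma complex_part:
  fixes T :: "'a::complex_hilbert \<Rightarrow>\<^sub>L 'b::complex_hilbert" and H0 :: "'a set" and n :: nat
  assumes cT: "clinear_op T" and nT: "norm T = 1" and sH: "module.subspace scaleC H0"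
    and Bex: "\<exists>B. finite B \<and> \<not> module.dependent scaleC B \<and> module.span scaleC B = H0 \<and> card B = n"
    and MT: "norm_attain_set T = {x \<in> H0. norm x = 1}"
    and rn: "restr_norm (blinfun_apply T) (corth_comp H0) < 1"
  shows "ck_smooth T (n ^ 2)"
proof -
  obtain B where B: "finite B" "\<not> cs.dependent B" "cs.span B = H0" "card B = n" using Bex by blast
  obtain e where orth: "corthonormal e n" and spE: "cs.span (e ` {..<n}) = H0"
    using gs_complex[OF B(1,2)] B(3,4) by auto
  have o1: "e i \<bullet> e j = (if i = j then 1 else 0)" if "i < n" "j < n" for i j
    using orth that unfolding corthonormal_def by auto
  have o2: "e i \<bullet> scaleC \<i> (e j) = 0" if "i < n" "j < n" for i j
    using orth that unfolding corthonormal_def by auto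
  have o3: "scaleC \<i> (e i) \<bullet> e j = 0" if "i < n" "j < n" for i j
    using o2[of j i] that by (simp add: inner_commute)
  have o4: "scaleC \<i> (e i) \<bullet> scaleC \<i> (e j) = (if i = j then 1 else 0)" if "i < n" "j < n" for i j
    using o1[OF that] by (simp add: inner_scaleC_ii)
  define E where "E = e ` {..<n}"
  define S where "S = E \<union> scaleC \<i> ` E"
  have sHr: "subspace H0" by (rule csubspace_real[OF sH])
  have ieH: "scaleC c x \<in> H0" if "x \<in> H0" for c x using sH that by (rule cs.subspace_scale)
  have eH: "e i \<in> H0" if "i < n" for i
    using spE cs.span_base[of "e i" E] that unfolding E_def by auto
  have H0S: "H0 \<subseteq> span S"
  proof -
    have ispan: "scaleC \<i> x \<in> span S" if "x \<in> span S" for x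
      using that
    proof (induction rule: span_induct)
      case base
      show ?case unfolding subspace_def
        by (auto simp: span_zero scaleC_add scaleC_scaleR intro: span_add span_scale)
    next
      case (step x)
      hence "x \<in> E \<or> x \<in> scaleC \<i> ` E" unfolding S_def by simp
      then show ?case
      proof
        assume "x \<in> E" thus ?thesis unfolding S_def by (auto intro: span_base)
      next
        assume "x \<in> scaleC \<i> ` E"
        then obtain y where y: "y \<in> E" "x = scaleC \<i> y" by auto
        have "- y \<in> span S" using y(1) unfolding S_def by (auto intro: span_neg span_base)
        thus ?thesis using y by (simp add: scaleC_ii)
      qed
    qed
    have "cs.subspace (span S)"
      unfolding cs.subspace_def
    proof (intro conjI ballI allI)
      show "0 \<in> span S" by (rule span_zero)
    next
      fix x y assume "x \<in> span S" "y \<in> span S"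
      thus "x + y \<in> span S" by (rule span_add)
    next
      fix c x assume x: "x \<in> span S"
      show "scaleC c x \<in> span S"
        unfolding scaleC_decomp[of c x] using x ispan[OF x] by (intro span_add span_scale)
    qed
    moreover have "E \<subseteq> span S" unfolding S_def by (auto intro: span_base)
    ultimately show ?thesis using spE unfolding E_def[symmetric] by (metis cs.span_minimal)
  qed
  have iso: "norm (T h) = norm h" if h: "h \<in> H0" for h
  proof (cases "h = 0")
    case True thus ?thesis by simp
  next
    case False
    define u where "u = (1 / norm h) *\<^sub>R h"
    have "u \<in> H0" unfolding u_def using sHr h by (simp add: subspace_scale)
    moreover have "norm u = 1" unfolding u_def using False by simp
    ultimately have "u \<in> norm_attain_set T" using MT by simp
    hence "norm (T u) = 1" using nT unfolding norm_attain_set_def by simp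
    moreover have "T h = norm h *\<^sub>R T u" unfolding u_def blinfun.scaleR_right using False by simp
    ultimately show ?thesis by simp
  qed
  have ip: "T u \<bullet> T v = u \<bullet> v" if "u \<in> H0" "v \<in> H0" for u v
  proof -
    have "u + v \<in> H0" using that sHr by (simp add: subspace_add)
    hence "(norm (T (u + v)))\<^sup>2 = (norm (u + v))\<^sup>2" using iso by simp
    moreover have "(norm (T u))\<^sup>2 = (norm u)\<^sup>2" "(norm (T v))\<^sup>2 = (norm v)\<^sup>2" using iso that by auto
    ultimately show ?thesis
      unfolding power2_norm_eq_inner blinfun.add_right
      by (simp add: inner_add_left inner_add_right inner_commute)
  qed
  have Ti: "T (scaleC c x) = scaleC c (T x)" for c x using cT unfolding clinear_op_def by simp
  have cTe: "cinner (T (e i)) (T (e k)) = (if i = k then 1 else 0)" if "i < n" "k < n" for i k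
  proof -
    have "Re (cinner (T (e i)) (T (e k))) = (if i = k then 1 else 0)"
      unfolding cinner_Re using ip[OF eH eH] o1 that by simp
    moreover have "Im (cinner (T (e i)) (T (e k))) = 0"
      unfolding cinner_Im Ti[symmetric] using ip[OF eH ieH[OF eH]] o2 that by simp
    ultimately show ?thesis by (simp add: complex_eq_iff)
  qed
  have ce: "cinner (e l) (e j) = (if l = j then 1 else 0)" if "l < n" "j < n" for l j
    using o1[OF that] o2[OF that] by (simp add: complex_eq_iff cinner_Re cinner_Im)
  define P where "P x = (\<Sum>i<n. (x \<bullet> e i) *\<^sub>R e i + (x \<bullet> scaleC \<i> (e i)) *\<^sub>R scaleC \<i> (e i))" for x
  have PH: "P x \<in> H0" for x
    unfolding P_def using sHr eH ieH by (intro subspace_sum subspace_add subspace_scale) auto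
  have Qe: "e j \<bullet> (x - P x) = 0" if "j < n" for x j
  proof -
    have "e j \<bullet> P x = (\<Sum>i<n. if i = j then x \<bullet> e i else 0)"
      unfolding P_def inner_sum_right using o1 o2 that
      by (intro sum.cong) (auto simp: inner_add_right inner_commute)
    also have "\<dots> = x \<bullet> e j" using that by (simp add: sum.delta)
    finally show ?thesis by (simp add: inner_diff_right inner_commute)
  qed
  have Qie: "scaleC \<i> (e j) \<bullet> (x - P x) = 0" if "j < n" for x j
  proof -
    have "scaleC \<i> (e j) \<bullet> P x = (\<Sum>i<n. if i = j then x \<bullet> scaleC \<i> (e i) else 0)"
      unfolding P_def inner_sum_right using o3 o4 that
      by (intro sum.cong) (auto simp: inner_add_right inner_commute)
    also have "\<dots> = x \<bullet> scaleC \<i> (e j)" using that by (simp add: sum.delta)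
    finally show ?thesis by (simp add: inner_diff_right inner_commute)
  qed
  have QH: "h \<bullet> (x - P x) = 0" if "h \<in> H0" for h x
  proof -
    have "h \<in> span S" using that H0S by auto
    hence "orthogonal h (x - P x)"
      by (rule orthogonal_to_span[of _ _ "x - P x", THEN orthogonal_commute[THEN iffD1]])
         (use Qe Qie in \<open>auto simp: S_def E_def orthogonal_def inner_commute\<close>)
    thus ?thesis by (simp add: orthogonal_def)
  qed
  have QO: "x - P x \<in> corth_comp H0" for x
    unfolding corth_comp_def
  proof (intro CollectI ballI)
    fix y assume y: "y \<in> H0"
    have "y \<bullet> scaleC \<i> (x - P x) = - (scaleC \<i> y \<bullet> (x - P x))" by (simp add: inner_ii_left)
    also have "\<dots> = 0" using QH[OF ieH[OF y]] by simp
    finally show "cinner y (x - P x) = 0"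
      using QH[OF y] by (simp add: cinner_def complex_eq_iff)
  qed
  define c where "c = max 0 (restr_norm (blinfun_apply T) (corth_comp H0))"
  have c0: "0 \<le> c" and c1: "c < 1" unfolding c_def using rn by auto
  have small: "norm (T (x - P x)) \<le> c * norm (x - P x)" for x
  proof -
    have "norm (T (x - P x)) \<le> restr_norm (blinfun_apply T) (corth_comp H0) * norm (x - P x)"
      by (rule restr_bound[OF _ QO]) (simp add: corth_comp_def cinner_scaleR_right)
    also have "\<dots> \<le> c * norm (x - P x)" unfolding c_def by (intro mult_right_mono) auto
    finally show ?thesis .
  qed
  have cross: "T (P x) \<bullet> T (x - P x) = 0" for x
    by (rule cross_zero) (use nT iso[OF PH] QH[OF PH] in auto)
  define I where "I = {..<n} \<times> {..<n}"
  have finI: "finite I" unfolding I_def by simp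
  define phi where "phi p = cfun T (e (snd p)) (e (fst p))" for p
  have phi_cdual: "phi p \<in> cdual" for p unfolding phi_def by (rule cfun_cdual)
  define G where "G p = cE T (e (fst p)) (e (snd p))" for p
  have clG: "clinear_op (G p)" for p unfolding G_def by (rule clinear_cE)
  have dual: "phi q (G p) = (if q = p then 1 else 0)" if "p \<in> I" "q \<in> I" for p q
  proof -
    obtain i j where p: "p = (i, j)" by (cases p)
    obtain k l where q: "q = (k, l)" by (cases q)
    have ij: "i < n" "j < n" and kl: "k < n" "l < n" using that p q unfolding I_def by auto
    have "phi q (G p) = cinner (e l) (e j) * cinner (T (e i)) (T (e k))"
      unfolding p q phi_def G_def cfun_def
      by (simp add: clinear_cE cE_apply cinner_scaleC_left)
    also have "\<dots> = (if q = p then 1 else 0)"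
      using ij kl unfolding p q by (auto simp: ce cTe)
    finally show ?thesis .
  qed
  have injphi: "inj_on phi I"
  proof (rule inj_onI)
    fix p q assume pq: "p \<in> I" "q \<in> I" "phi p = phi q"
    have "phi q (G p) = 1" using dual[OF pq(1) pq(1)] pq(3) by simp
    thus "p = q" using dual[OF pq(1) pq(2)] by (auto split: if_splits)
  qed
  have cardB: "card (phi ` I) = n ^ 2"
    using card_image[OF injphi] unfolding I_def by (simp add: card_cartesian_product power2_eq_square)
  have indep: "\<not> fs.dependent (phi ` I)"
  proof -
    have "\<not> (\<exists>u. (\<exists>v \<in> phi ` I. u v \<noteq> 0) \<and> (\<Sum>v\<in>phi ` I. fscale (u v) v) = 0)"
    proof
      assume "\<exists>u. (\<exists>v \<in> phi ` I. u v \<noteq> 0) \<and> (\<Sum>v\<in>phi ` I. fscale (u v) v) = 0"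
      then obtain u q where q: "q \<in> I" "u (phi q) \<noteq> 0" and s: "(\<Sum>v\<in>phi ` I. fscale (u v) v) = 0"
        by auto
      have "0 = (\<Sum>v\<in>phi ` I. fscale (u v) v) (G q)" using s by simp
      also have "\<dots> = (\<Sum>p\<in>I. u (phi p) * phi p (G q))"
        by (simp add: fun_sum_apply sum.reindex[OF injphi])
      also have "\<dots> = (\<Sum>p\<in>I. if p = q then u (phi p) else 0)"
        using dual q(1) by (intro sum.cong) auto
      also have "\<dots> = u (phi q)" using q(1) finI by (simp add: sum.delta')
      finally show False using q(2) by simp
    qed
    thus ?thesis using fs.dependent_finite[of "phi ` I"] finI by auto
  qed
  have psi_supp: "cfun T v v \<in> fs.span (csupp_funcs T)" if v: "v \<in> H0" for v
  proof (cases "v = 0")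
    case True
    thus ?thesis by (simp add: cfun_zero fs.span_zero)
  next
    case False
    define u where "u = (1 / norm v) *\<^sub>R v"
    have uH: "u \<in> H0" unfolding u_def using sHr v by (simp add: subspace_scale)
    have nu: "norm u = 1" unfolding u_def using False by simp
    have Tu: "norm (T u) = 1" using iso[OF uH] nu by simp
    have "cfun T u u \<in> csupp_funcs T"
    proof -
      have val: "cfun T u u T = 1" using Tu cT by (simp add: cfun_def cinner_self)
      have "cdual_norm (cfun T u u) = 1"
        unfolding cdual_norm_def
      proof (rule cSup_eq_maximum)
        show "1 \<in> {cmod (cfun T u u A) | A. clinear_op A \<and> norm A \<le> 1}"
          using val cT nT by (auto intro!: exI[of _ T])
      next
        fix x assume "x \<in> {cmod (cfun T u u A) | A. clinear_op A \<and> norm A \<le> 1}"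
        then obtain A where A: "x = cmod (cfun T u u A)" "clinear_op A" "norm A \<le> 1" by auto
        have "x = cmod (cinner (A u) (T u))" using A by (simp add: cfun_def)
        also have "\<dots> \<le> norm (A u) * norm (T u)" by (rule cinner_norm)
        also have "\<dots> \<le> norm A * norm u" using Tu by (simp add: norm_blinfun)
        also have "\<dots> \<le> 1" using A(3) nu by simp
        finally show "x \<le> 1" .
      qed
      thus ?thesis unfolding csupp_funcs_def using cfun_cdual val by auto
    qed
    moreover have "cfun T v v = fscale (complex_of_real ((norm v)\<^sup>2)) (cfun T u u)"
    proof -
      have "v = norm v *\<^sub>R u" unfolding u_def using False by simp
      hence "cfun T v v = cfun T (norm v *\<^sub>R u) (norm v *\<^sub>R u)" by simp
      thus ?thesis by (simp only: cfun_scaleR)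
    qed
    ultimately show ?thesis by (simp add: fs.span_base fs.span_scale)
  qed
  have phi_span: "phi p \<in> fs.span (csupp_funcs T)" if "p \<in> I" for p
  proof -
    obtain i j where p: "p = (i, j)" by (cases p)
    have ij: "i < n" "j < n" using that p unfolding I_def by auto
    define x where "x = e j"
    define y where "y = e i"
    have xy: "x \<in> H0" "y \<in> H0" "scaleC \<i> y \<in> H0" unfolding x_def y_def using eH ij ieH by auto
    have "x + y \<in> H0" "x - y \<in> H0" "x + scaleC \<i> y \<in> H0" "x - scaleC \<i> y \<in> H0"
      using xy sHr by (auto simp: subspace_add subspace_diff)
    hence "fscale (1/4) (cfun T (x + y) (x + y) - cfun T (x - y) (x - y)
     + fscale \<i> (cfun T (x + scaleC \<i> y) (x + scaleC \<i> y)) - fscale \<i> (cfun T (x - scaleC \<i> y) (x - scaleC \<i> y)))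
      \<in> fs.span (csupp_funcs T)"
      using psi_supp by (intro fs.span_scale fs.span_add fs.span_diff) auto
    moreover have "phi p = cfun T x y" unfolding phi_def p x_def y_def by simp
    ultimately show ?thesis using cfun_polar[OF cT, of x y] by simp
  qed
  have supp_span: "f \<in> fs.span (phi ` I)" if f: "f \<in> csupp_funcs T" for f
  proof -
    have fd: "f \<in> cdual" and nf: "cdual_norm f = 1" and fT: "f T = 1"
      using f unfolding csupp_funcs_def by auto
    have fA: "f A = (\<Sum>p\<in>I. phi p A * f (G p))" if cA: "clinear_op A" for A
    proof -
      define Y where "Y = A - (\<Sum>p\<in>I. cscaleL (phi p A) (G p))"
      have clS: "clinear_op (\<Sum>p\<in>I. cscaleL (phi p A) (G p))"
        by (intro clinear_sum clinear_cscaleL clG)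
      have cY: "clinear_op Y" unfolding Y_def by (intro clinear_diff cA clS)
      have lin: "g Y = g A - (\<Sum>p\<in>I. phi p A * g (G p))" if g: "g \<in> cdual" for g
        unfolding Y_def
        by (simp add: cdual_diff[OF g cA clS] cdual_sum[OF g] clinear_cscaleL clG cdual_scale[OF g])
      have phiY: "phi q Y = 0" if q: "q \<in> I" for q
      proof -
        have "(\<Sum>p\<in>I. phi p A * phi q (G p)) = (\<Sum>p\<in>I. if p = q then phi p A else 0)"
          using dual q by (intro sum.cong) auto
        also have "\<dots> = phi q A" using q finI by (simp add: sum.delta')
        finally show ?thesis using lin[OF phi_cdual] by simp
      qed
      have Yi: "Y (scaleC c z) = scaleC c (Y z)" for c z using cY unfolding clinear_op_def by simp
      have z1: "Y (e j) \<bullet> T (e i) = 0" "Y (e j) \<bullet> scaleC \<i> (T (e i)) = 0" if "i < n" "j < n" for i j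
      proof -
        have "cinner (Y (e j)) (T (e i)) = 0"
          using phiY[of "(i, j)"] that cY unfolding I_def phi_def cfun_def by simp
        thus "Y (e j) \<bullet> T (e i) = 0" "Y (e j) \<bullet> scaleC \<i> (T (e i)) = 0"
          by (simp_all add: cinner_def complex_eq_iff)
      qed
      have zS: "Y u \<bullet> T v = 0" if "u \<in> S" "v \<in> S" for u v
      proof -
        obtain j where j: "j < n" "u = e j \<or> u = scaleC \<i> (e j)" using \<open>u \<in> S\<close> unfolding S_def E_def by auto
        obtain i where i: "i < n" "v = e i \<or> v = scaleC \<i> (e i)" using \<open>v \<in> S\<close> unfolding S_def E_def by auto
        have a: "Y (scaleC \<i> (e j)) \<bullet> T (e i) = 0"
          unfolding Yi inner_ii_left using z1[OF i(1) j(1)] by simp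
        have b: "Y (scaleC \<i> (e j)) \<bullet> T (scaleC \<i> (e i)) = 0"
          unfolding Yi Ti inner_scaleC_ii using z1[OF i(1) j(1)] by simp
        have c: "Y (e j) \<bullet> T (scaleC \<i> (e i)) = 0"
          unfolding Ti using z1[OF i(1) j(1)] by simp
        show ?thesis using i(2) j(2) a b c z1[OF i(1) j(1)] by auto
      qed
      have bl: "bilinear (\<lambda>u v. Y u \<bullet> T v)"
        unfolding bilinear_def
        by (auto intro!: linearI simp: blinfun.add_right blinfun.scaleR_right inner_add_left inner_add_right)
      have bl0: "bilinear (\<lambda>u v. 0::real)" unfolding bilinear_def by (auto intro!: linearI)
      have YH: "Y u \<bullet> T v = 0" if "u \<in> H0" "v \<in> H0" for u v
        using bilinear_eq[OF bl bl0 H0S H0S that] zS by auto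
      have YH1: "T (P x) \<bullet> Y (P x) = 0" for x using YH[OF PH PH] by (simp add: inner_commute)
      define Y' where "Y' = cscaleL \<i> Y"
      have cY': "clinear_op Y'" unfolding Y'_def by (rule clinear_cscaleL[OF cY])
      have YH2: "T (P x) \<bullet> Y' (P x) = 0" for x
      proof -
        have "T (P x) \<bullet> Y' (P x) = T (P x) \<bullet> scaleC \<i> (Y (P x))" unfolding Y'_def cscaleL_apply by simp
        also have "\<dots> = - (scaleC \<i> (T (P x)) \<bullet> Y (P x))" by (simp add: inner_ii_left)
        also have "\<dots> = - (Y (P x) \<bullet> T (scaleC \<i> (P x)))" by (simp add: Ti inner_commute)
        also have "\<dots> = 0" using YH[OF PH ieH[OF PH]] by simp
        finally show ?thesis .
      qed
      obtain D where D: "\<And>t. norm (T + t *\<^sub>R Y) \<le> 1 + D * t\<^sup>2"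
        using core_bound[OF nT iso[OF PH] QH[OF PH] small c0 c1 cross YH1] by blast
      obtain D' where D': "\<And>t. norm (T + t *\<^sub>R Y') \<le> 1 + D' * t\<^sup>2"
        using core_bound[OF nT iso[OF PH] QH[OF PH] small c0 c1 cross YH2] by blast
      have r1: "Re (f Y) = 0" by (rule re_zero[OF fd nf fT cT cY D])
      have r2: "Re (f Y') = 0" by (rule re_zero[OF fd nf fT cT cY' D'])
      have "f Y' = \<i> * f Y" unfolding Y'_def by (rule cdual_scale[OF fd cY])
      hence "Im (f Y) = 0" using r2 by simp
      hence fY: "f Y = 0" using r1 by (simp add: complex_eq_iff)
      show ?thesis using lin[OF fd] fY by simp
    qed
    have "f = (\<Sum>p\<in>I. fscale (f (G p)) (phi p))"
    proof (rule ext)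
      fix A
      show "f A = (\<Sum>p\<in>I. fscale (f (G p)) (phi p)) A"
      proof (cases "clinear_op A")
        case True
        have "(\<Sum>p\<in>I. fscale (f (G p)) (phi p)) A = (\<Sum>p\<in>I. f (G p) * phi p A)"
          by (simp add: fun_sum_apply)
        also have "\<dots> = (\<Sum>p\<in>I. phi p A * f (G p))"
          by (rule sum.cong[OF refl]) (rule mult.commute)
        finally show ?thesis using fA[OF True] by simp
      next
        case False
        thus ?thesis using cdual_nonlin[OF fd False]
          by (simp add: fun_sum_apply phi_def cfun_def)
      qed
    qed
    also have "\<dots> \<in> fs.span (phi ` I)"
      by (intro fs.span_sum fs.span_scale fs.span_base) auto
    finally show ?thesis .
  qed
  have "fs.span (phi ` I) = fs.span (csupp_funcs T)"
    unfolding fs.span_eq using phi_span supp_span by auto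
  thus ?thesis unfolding ck_smooth_def using cT nT finI indep cardB by blast
qed


theorem theorem2p1:
  shows
  "(\<forall>(T :: 'a::complex_hilbert \<Rightarrow>\<^sub>L 'b::complex_hilbert) (H0 :: 'a set) (n :: nat).
      clinear_op T \<and> norm T = 1 \<and>
      module.subspace scaleC H0 \<and>
      (\<exists>B. finite B \<and> \<not> module.dependent scaleC B \<and> module.span scaleC B = H0 \<and> card B = n) \<and>
      norm_attain_set T = {x \<in> H0. norm x = 1} \<and>
      restr_norm (blinfun_apply T) (corth_comp H0) < 1
      \<longrightarrow> ck_smooth T (n ^ 2))
   \<and>
   (\<forall>(T :: 'c::{real_inner, complete_space} \<Rightarrow>\<^sub>L 'd::{real_inner, complete_space})
       (H0 :: 'c set) (n :: nat).
      norm T = 1 \<and>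
      subspace H0 \<and>
      (\<exists>B. finite B \<and> independent B \<and> span B = H0 \<and> card B = n) \<and>
      norm_attain_set T = {x \<in> H0. norm x = 1} \<and>
      restr_norm (blinfun_apply T) (orthogonal_comp H0) < 1
      \<longrightarrow> k_smooth T ((n + 1) choose 2))"
proof (intro conjI allI impI)
  fix T :: "'a::complex_hilbert \<Rightarrow>\<^sub>L 'b::complex_hilbert" and H0 :: "'a set" and n :: nat
  assume h: "clinear_op T \<and> norm T = 1 \<and>
      module.subspace scaleC H0 \<and>
      (\<exists>B. finite B \<and> \<not> module.dependent scaleC B \<and> module.span scaleC B = H0 \<and> card B = n) \<and>
      norm_attain_set T = {x \<in> H0. norm x = 1} \<and>
      restr_norm (blinfun_apply T) (corth_comp H0) < 1"
  show "ck_smooth T (n ^ 2)"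
    by (rule complex_part) (use h in auto)
next
  fix T :: "'c::{real_inner, complete_space} \<Rightarrow>\<^sub>L 'd::{real_inner, complete_space}"
    and H0 :: "'c set" and n :: nat
  assume h: "norm T = 1 \<and>
      subspace H0 \<and>
      (\<exists>B. finite B \<and> independent B \<and> span B = H0 \<and> card B = n) \<and>
      norm_attain_set T = {x \<in> H0. norm x = 1} \<and>
      restr_norm (blinfun_apply T) (orthogonal_comp H0) < 1"
  show "k_smooth T ((n + 1) choose 2)"
    by (rule real_part) (use h in auto)
qed

end
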